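(* Let $\Lambda_1$ be a $k_1$-graph and $\Lambda_2$ a $k_2$-graph, and let $\Lambda_1\times\Lambda_2$ be their cartesian product $(k_1+k_2)$-graph. Then: (a) $\Lambda_1\times\Lambda_2$ is a row-finite $(k_1+k_2)$-graph with no sources if and only if $\Lambda_i$ is a row-finite $k_i$-graph with no sources for $i=1,2$; (b) $\Lambda_1\times\Lambda_2$ is aperiodic if and only if $\Lambda_1$ and $\Lambda_2$ are aperiodic; (c) $\Lambda_1\times\Lambda_2$ is strongly aperiodic if and only if $\Lambda_1$ and $\Lambda_2$ are strongly aperiodic.
   Context: A $k$-graph is a countable category $\Lambda$ with a functor $d:\Lambda\to\mathbb{N}^k$ satisfying the factorization property: whenever $d(\lambda)=m+n$ there are unique $\mu,\nu$ with $\lambda=\mu\nu$, $d(\mu)=m$, $d(\nu)=n$. $\Lambda^n=d^{-1}(n)$, $\Lambda^0$ the vertices, $r,s$ range and source, $v\Lambda^n=\{\lambda:r(\lambda)=v,d(\lambda)=n\}$. Row-finite: each $v\Lambda^n$ finite; no sources: $v\Lambda^{e_i}\neq\emptyset$ for all $v$ and all standard generators $e_i$. The cartesian product of a $k_1$-graph $(\Lambda_1,d_1)$ and a $k_2$-graph $(\Lambda_2,d_2)$ is the product category $\Lambda_1\times\Lambda_2$ with degree $(d_1\times d_2)(\lambda_1,\lambda_2)=(d_1(\lambda_1),d_2(\lambda_2))\in\mathbb{N}^{k_1}\times\mathbb{N}^{k_2}=\mathbb{N}^{k_1+k_2}$. For $0\le m\le n\le d(\lambda)$, $\lambda(m,n)$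 is the unique path with $\lambda=\lambda'\lambda(m,n)\lambda''$, $d(\lambda')=m$, $d(\lambda(m,n))=n-m$. No local periodicity at $v$: for each $m\ne n\in\mathbb{N}^k$ there is $\lambda$ with $r(\lambda)=v$, $d(\lambda)\ge m\vee n$ and $\lambda(m,m+d(\lambda)-(m\vee n))\ne\lambda(n,n+d(\lambda)-(m\vee n))$ ($\vee$ coordinatewise max); aperiodic: no local periodicity at every vertex. $v\le w$ means some path has range $v$, source $w$; $H\subseteq\Lambda^0$ hereditary if $v\in H$, $v\le w$ imply $w\in H$; saturated if for every $v$: $r^{-1}(v)\ne\emptyset$ and $\{s(\lambda):\lambda\in v\Lambda^{e_i}\}\subseteq H$ for some $i$ imply $v\in H$. For saturated hereditary $H\subsetneq\Lambda^0$, $\Gamma(\Lambda\setminus H)$ is the $k$-graph with vertices $\Lambda^0\setminus H$ and morphisms $\{\lambda:s(\lambda)\notin H\}$. A row-finite $k$-graph with no sources is strongly aperiodic if $\Gamma(\Lambda\setminus H)$ is aperiodic for every saturated hereditary $H\subsetneq\Lambda^0$. *)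

theory Defs
  imports "HOL-Library.Countable_Set"
begin

text \<open>Degrees in N^k are functions nat => nat vanishing outside {..<k}.
Composition convention: cmp mu nu is the path mu nu, defined when
src mu = rng nu; then rng (mu nu) = rng mu and src (mu nu) = src nu.\<close>

record ('v, 'a) kgraph =
  Obj :: "'v set"
  Mor :: "'a set"
  rng :: "'a \<Rightarrow> 'v"
  src :: "'a \<Rightarrow> 'v"
  cmp :: "'a \<Rightarrow> 'a \<Rightarrow> 'a"
  idm :: "'v \<Rightarrow> 'a"
  deg :: "'a \<Rightarrow> nat \<Rightarrow> nat"

definition deg_space :: "nat \<Rightarrow> (nat \<Rightarrow> nat) set" where
  "deg_space k = {m. \<forall>i. k \<le> i \<longrightarrow> m i = 0}"

definition dadd :: "(nat \<Rightarrow> nat) \<Rightarrow> (nat \<Rightarrow> nat) \<Rightarrow> nat \<Rightarrow> nat" where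
  "dadd m n = (\<lambda>i. m i + n i)"

definition dsub :: "(nat \<Rightarrow> nat) \<Rightarrow> (nat \<Rightarrow> nat) \<Rightarrow> nat \<Rightarrow> nat" where
  "dsub m n = (\<lambda>i. m i - n i)"

definition djoin :: "(nat \<Rightarrow> nat) \<Rightarrow> (nat \<Rightarrow> nat) \<Rightarrow> nat \<Rightarrow> nat" where
  "djoin m n = (\<lambda>i. max (m i) (n i))"

definition dle :: "(nat \<Rightarrow> nat) \<Rightarrow> (nat \<Rightarrow> nat) \<Rightarrow> bool" where
  "dle m n = (\<forall>i. m i \<le> n i)"

definition unit_deg :: "nat \<Rightarrow> nat \<Rightarrow> nat" where
  "unit_deg i = (\<lambda>j. if j = i then 1 else 0)"

definition is_kgraph :: "nat \<Rightarrow> ('v, 'a, 'z) kgraph_scheme \<Rightarrow> bool" where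
  "is_kgraph k G \<longleftrightarrow>
     countable (Obj G) \<and> countable (Mor G) \<and>
     (\<forall>l\<in>Mor G. rng G l \<in> Obj G \<and> src G l \<in> Obj G) \<and>
     (\<forall>v\<in>Obj G. idm G v \<in> Mor G \<and> rng G (idm G v) = v \<and> src G (idm G v) = v) \<and>
     (\<forall>\<mu>\<in>Mor G. \<forall>\<nu>\<in>Mor G. src G \<mu> = rng G \<nu> \<longrightarrow>
        cmp G \<mu> \<nu> \<in> Mor G \<and> rng G (cmp G \<mu> \<nu>) = rng G \<mu> \<and> src G (cmp G \<mu> \<nu>) = src G \<nu>) \<and>
     (\<forall>l\<in>Mor G. cmp G (idm G (rng G l)) l = l \<and> cmp G l (idm G (src G l)) = l) \<and>
     (\<forall>\<alpha>\<in>Mor G. \<forall>\<mu>\<in>Mor G. \<forall>\<nu>\<in>Mor G. src G \<alpha> = rng G \<mu> \<longrightarrow> src G \<mu> = rng G \<nu> \<longrightarrow>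
        cmp G (cmp G \<alpha> \<mu>) \<nu> = cmp G \<alpha> (cmp G \<mu> \<nu>)) \<and>
     (\<forall>l\<in>Mor G. deg G l \<in> deg_space k) \<and>
     (\<forall>v\<in>Obj G. deg G (idm G v) = (\<lambda>_. 0)) \<and>
     (\<forall>\<mu>\<in>Mor G. \<forall>\<nu>\<in>Mor G. src G \<mu> = rng G \<nu> \<longrightarrow>
        deg G (cmp G \<mu> \<nu>) = dadd (deg G \<mu>) (deg G \<nu>)) \<and>
     (\<forall>l\<in>Mor G. \<forall>m\<in>deg_space k. \<forall>n\<in>deg_space k. deg G l = dadd m n \<longrightarrow>
        (\<exists>!p. fst p \<in> Mor G \<and> snd p \<in> Mor G \<and> src G (fst p) = rng G (snd p) \<and>
              l = cmp G (fst p) (snd p) \<and> deg G (fst p) = m \<and> deg G (snd p) = n))"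

definition paths_from :: "('v, 'a, 'z) kgraph_scheme \<Rightarrow> 'v \<Rightarrow> (nat \<Rightarrow> nat) \<Rightarrow> 'a set" where
  "paths_from G v n = {l \<in> Mor G. rng G l = v \<and> deg G l = n}"

definition row_finite :: "nat \<Rightarrow> ('v, 'a, 'z) kgraph_scheme \<Rightarrow> bool" where
  "row_finite k G \<longleftrightarrow> (\<forall>v\<in>Obj G. \<forall>n\<in>deg_space k. finite (paths_from G v n))"

definition no_sources :: "nat \<Rightarrow> ('v, 'a, 'z) kgraph_scheme \<Rightarrow> bool" where
  "no_sources k G \<longleftrightarrow> (\<forall>v\<in>Obj G. \<forall>i<k. paths_from G v (unit_deg i) \<noteq> {})"

definition rfns_kgraph :: "nat \<Rightarrow> ('v, 'a, 'z) kgraph_scheme \<Rightarrow> bool" where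
  "rfns_kgraph k G \<longleftrightarrow> is_kgraph k G \<and> row_finite k G \<and> no_sources k G"

definition seg :: "('v, 'a, 'z) kgraph_scheme \<Rightarrow> 'a \<Rightarrow> (nat \<Rightarrow> nat) \<Rightarrow> (nat \<Rightarrow> nat) \<Rightarrow> 'a" where
  "seg G l m n = (THE \<nu>. \<nu> \<in> Mor G \<and> (\<exists>l1\<in>Mor G. \<exists>l2\<in>Mor G.
       src G l1 = rng G \<nu> \<and> src G \<nu> = rng G l2 \<and>
       l = cmp G (cmp G l1 \<nu>) l2 \<and> deg G l1 = m \<and> deg G \<nu> = dsub n m))"

definition no_local_periodicity :: "nat \<Rightarrow> ('v, 'a, 'z) kgraph_scheme \<Rightarrow> 'v \<Rightarrow> bool" where
  "no_local_periodicity k G v \<longleftrightarrow>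
     (\<forall>m\<in>deg_space k. \<forall>n\<in>deg_space k. m \<noteq> n \<longrightarrow>
       (\<exists>l\<in>Mor G. rng G l = v \<and> dle (djoin m n) (deg G l) \<and>
          seg G l m (dadd m (dsub (deg G l) (djoin m n))) \<noteq>
          seg G l n (dadd n (dsub (deg G l) (djoin m n)))))"

definition aperiodic :: "nat \<Rightarrow> ('v, 'a, 'z) kgraph_scheme \<Rightarrow> bool" where
  "aperiodic k G \<longleftrightarrow> (\<forall>v\<in>Obj G. no_local_periodicity k G v)"

definition hereditary :: "('v, 'a, 'z) kgraph_scheme \<Rightarrow> 'v set \<Rightarrow> bool" where
  "hereditary G H \<longleftrightarrow> (\<forall>l\<in>Mor G. rng G l \<in> H \<longrightarrow> src G l \<in> H)"

definition saturated :: "nat \<Rightarrow> ('v, 'a, 'z) kgraph_scheme \<Rightarrow> 'v set \<Rightarrow> bool" where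
  "saturated k G H \<longleftrightarrow>
     (\<forall>v\<in>Obj G. (\<exists>l\<in>Mor G. rng G l = v) \<and>
        (\<exists>i<k. src G ` paths_from G v (unit_deg i) \<subseteq> H) \<longrightarrow> v \<in> H)"

definition restrict_kg :: "('v, 'a) kgraph \<Rightarrow> 'v set \<Rightarrow> ('v, 'a) kgraph" where
  "restrict_kg G H = G\<lparr>Obj := Obj G - H, Mor := {l \<in> Mor G. src G l \<notin> H}\<rparr>"

definition strongly_aperiodic :: "nat \<Rightarrow> ('v, 'a) kgraph \<Rightarrow> bool" where
  "strongly_aperiodic k G \<longleftrightarrow> rfns_kgraph k G \<and>
     (\<forall>H. H \<subseteq> Obj G \<and> H \<noteq> Obj G \<and> hereditary G H \<and> saturated k G H \<longrightarrow>
        aperiodic k (restrict_kg G H))"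

definition kg_product :: "nat \<Rightarrow> ('v1, 'a1) kgraph \<Rightarrow> ('v2, 'a2) kgraph \<Rightarrow>
    ('v1 \<times> 'v2, 'a1 \<times> 'a2) kgraph" where
  "kg_product k1 G1 G2 =
    \<lparr> Obj = Obj G1 \<times> Obj G2,
      Mor = Mor G1 \<times> Mor G2,
      rng = (\<lambda>(a, b). (rng G1 a, rng G2 b)),
      src = (\<lambda>(a, b). (src G1 a, src G2 b)),
      cmp = (\<lambda>(a, b) (c, d). (cmp G1 a c, cmp G2 b d)),
      idm = (\<lambda>(v, w). (idm G1 v, idm G2 w)),
      deg = (\<lambda>(a, b) i. if i < k1 then deg G1 a i else deg G2 b (i - k1)) \<rparr>"

end

theory Submission
  imports Defs
begin

definition cmb :: "nat \<Rightarrow> (nat \<Rightarrow> nat) \<Rightarrow> (nat \<Rightarrow> nat) \<Rightarrow> nat \<Rightarrow> nat" where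
  "cmb k1 d1 d2 = (\<lambda>i. if i < k1 then d1 i else d2 (i - k1))"
definition pr1 :: "nat \<Rightarrow> (nat \<Rightarrow> nat) \<Rightarrow> nat \<Rightarrow> nat" where
  "pr1 k1 d = (\<lambda>i. if i < k1 then d i else 0)"
definition pr2 :: "nat \<Rightarrow> (nat \<Rightarrow> nat) \<Rightarrow> nat \<Rightarrow> nat" where
  "pr2 k1 d = (\<lambda>i. d (i + k1))"

lemma kgp_simps:
  "Obj (kg_product k1 G1 G2) = Obj G1 \<times> Obj G2"
  "Mor (kg_product k1 G1 G2) = Mor G1 \<times> Mor G2"
  "rng (kg_product k1 G1 G2) (a, b) = (rng G1 a, rng G2 b)"
  "src (kg_product k1 G1 G2) (a, b) = (src G1 a, src G2 b)"
  "cmp (kg_product k1 G1 G2) (a, b) (c, d) = (cmp G1 a c, cmp G2 b d)"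
  "idm (kg_product k1 G1 G2) (v, w) = (idm G1 v, idm G2 w)"
  "deg (kg_product k1 G1 G2) (a, b) = cmb k1 (deg G1 a) (deg G2 b)"
  by (simp_all add: kg_product_def cmb_def)

context
  fixes k :: nat and G :: "('v, 'a, 'z) kgraph_scheme"
  assumes kg: "is_kgraph k G"
begin
lemma kgc: "countable (Obj G) \<and> countable (Mor G) \<and>
     (\<forall>l\<in>Mor G. rng G l \<in> Obj G \<and> src G l \<in> Obj G) \<and>
     (\<forall>v\<in>Obj G. idm G v \<in> Mor G \<and> rng G (idm G v) = v \<and> src G (idm G v) = v) \<and>
     (\<forall>\<mu>\<in>Mor G. \<forall>\<nu>\<in>Mor G. src G \<mu> = rng G \<nu> \<longrightarrow>
        cmp G \<mu> \<nu> \<in> Mor G \<and> rng G (cmp G \<mu> \<nu>) = rng G \<mu> \<and> src G (cmp G \<mu> \<nu>) = src G \<nu>) \<and>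
     (\<forall>l\<in>Mor G. cmp G (idm G (rng G l)) l = l \<and> cmp G l (idm G (src G l)) = l) \<and>
     (\<forall>\<alpha>\<in>Mor G. \<forall>\<mu>\<in>Mor G. \<forall>\<nu>\<in>Mor G. src G \<alpha> = rng G \<mu> \<longrightarrow> src G \<mu> = rng G \<nu> \<longrightarrow>
        cmp G (cmp G \<alpha> \<mu>) \<nu> = cmp G \<alpha> (cmp G \<mu> \<nu>)) \<and>
     (\<forall>l\<in>Mor G. deg G l \<in> deg_space k) \<and>
     (\<forall>v\<in>Obj G. deg G (idm G v) = (\<lambda>_. 0)) \<and>
     (\<forall>\<mu>\<in>Mor G. \<forall>\<nu>\<in>Mor G. src G \<mu> = rng G \<nu> \<longrightarrow>
        deg G (cmp G \<mu> \<nu>) = dadd (deg G \<mu>) (deg G \<nu>)) \<and>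
     (\<forall>l\<in>Mor G. \<forall>m\<in>deg_space k. \<forall>n\<in>deg_space k. deg G l = dadd m n \<longrightarrow>
        (\<exists>!p. fst p \<in> Mor G \<and> snd p \<in> Mor G \<and> src G (fst p) = rng G (snd p) \<and>
              l = cmp G (fst p) (snd p) \<and> deg G (fst p) = m \<and> deg G (snd p) = n))"
  using kg unfolding is_kgraph_def .
lemma kg_rng: "l \<in> Mor G \<Longrightarrow> rng G l \<in> Obj G" using kgc by simp
lemma kg_src: "l \<in> Mor G \<Longrightarrow> src G l \<in> Obj G" using kgc by simp
lemma kg_idm: "v \<in> Obj G \<Longrightarrow> idm G v \<in> Mor G" "v \<in> Obj G \<Longrightarrow> rng G (idm G v) = v"
  "v \<in> Obj G \<Longrightarrow> src G (idm G v) = v" using kgc by simp_all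
lemma kg_cmp: "\<mu> \<in> Mor G \<Longrightarrow> \<nu> \<in> Mor G \<Longrightarrow> src G \<mu> = rng G \<nu> \<Longrightarrow> cmp G \<mu> \<nu> \<in> Mor G"
  "\<mu> \<in> Mor G \<Longrightarrow> \<nu> \<in> Mor G \<Longrightarrow> src G \<mu> = rng G \<nu> \<Longrightarrow> rng G (cmp G \<mu> \<nu>) = rng G \<mu>"
  "\<mu> \<in> Mor G \<Longrightarrow> \<nu> \<in> Mor G \<Longrightarrow> src G \<mu> = rng G \<nu> \<Longrightarrow> src G (cmp G \<mu> \<nu>) = src G \<nu>"
  using kgc by simp_all
lemma kg_idlr: "l \<in> Mor G \<Longrightarrow> cmp G (idm G (rng G l)) l = l"
  "l \<in> Mor G \<Longrightarrow> cmp G l (idm G (src G l)) = l"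
  using kgc by simp_all
lemma kg_deg: "l \<in> Mor G \<Longrightarrow> deg G l \<in> deg_space k"
  "v \<in> Obj G \<Longrightarrow> deg G (idm G v) = (\<lambda>_. 0)"
  "\<mu> \<in> Mor G \<Longrightarrow> \<nu> \<in> Mor G \<Longrightarrow> src G \<mu> = rng G \<nu> \<Longrightarrow> deg G (cmp G \<mu> \<nu>) = dadd (deg G \<mu>) (deg G \<nu>)"
  using kgc by simp_all
lemma kg_deg0: "l \<in> Mor G \<Longrightarrow> i \<ge> k \<Longrightarrow> deg G l i = 0"
  using kg_deg(1) unfolding deg_space_def by blast
lemma kg_fact: "l \<in> Mor G \<Longrightarrow> m \<in> deg_space k \<Longrightarrow> n \<in> deg_space k \<Longrightarrow> deg G l = dadd m n \<Longrightarrow>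
        (\<exists>!p. fst p \<in> Mor G \<and> snd p \<in> Mor G \<and> src G (fst p) = rng G (snd p) \<and>
              l = cmp G (fst p) (snd p) \<and> deg G (fst p) = m \<and> deg G (snd p) = n)"
  using kgc by blast

lemma kg_fact_uniq:
  assumes "l \<in> Mor G" "m \<in> deg_space k" "n \<in> deg_space k"
    "a \<in> Mor G" "b \<in> Mor G" "src G a = rng G b" "l = cmp G a b" "deg G a = m" "deg G b = n"
    "a' \<in> Mor G" "b' \<in> Mor G" "src G a' = rng G b'" "l = cmp G a' b'" "deg G a' = m" "deg G b' = n"
  shows "a = a' \<and> b = b'"
proof -
  have "deg G l = dadd m n" using assms kg_deg(3) by auto
  from kg_fact[OF assms(1-3) this] have "(a, b) = (a', b')"
    using assms by (metis fst_conv snd_conv)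
  thus ?thesis by simp
qed

lemma kg_fact_ex:
  assumes "l \<in> Mor G" "m \<in> deg_space k" "n \<in> deg_space k" "deg G l = dadd m n"
  obtains a b where "a \<in> Mor G" "b \<in> Mor G" "src G a = rng G b" "l = cmp G a b" "deg G a = m" "deg G b = n"
  using kg_fact[OF assms] by blast

lemma kg_deg_zero: assumes "l \<in> Mor G" "deg G l = (\<lambda>_. 0)" shows "l = idm G (rng G l)"
proof -
  have z: "(\<lambda>_. 0) \<in> deg_space k" by (simp add: deg_space_def)
  have r: "rng G l \<in> Obj G" "src G l \<in> Obj G" using assms kg_rng kg_src by auto
  have "idm G (rng G l) = l \<and> l = idm G (src G l)"
    apply (rule kg_fact_uniq[OF assms(1) z z])
    using assms r kg_idm kg_idlr kg_deg(2) by simp_all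
  then show ?thesis by simp
qed

lemma ds_dsub: "n \<in> deg_space k \<Longrightarrow> dsub n m \<in> deg_space k"
  by (simp add: deg_space_def dsub_def)

lemma kg_seg_ex:
  assumes "l \<in> Mor G" "m \<in> deg_space k" "n \<in> deg_space k" "dle m n" "dle n (deg G l)"
  obtains l1 \<nu> l2 where "l1 \<in> Mor G" "\<nu> \<in> Mor G" "l2 \<in> Mor G" "src G l1 = rng G \<nu>"
    "src G \<nu> = rng G l2" "l = cmp G (cmp G l1 \<nu>) l2" "deg G l1 = m" "deg G \<nu> = dsub n m"
proof -
  have "deg G l = dadd n (dsub (deg G l) n)" using assms(5)
    by (auto simp: dadd_def dsub_def dle_def fun_eq_iff)
  then obtain X l2 where X: "X \<in> Mor G" "l2 \<in> Mor G" "src G X = rng G l2" "l = cmp G X l2" "deg G X = n"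
    using kg_fact_ex[OF assms(1) assms(3) ds_dsub[OF kg_deg(1)[OF assms(1)]]] by metis
  have "deg G X = dadd m (dsub n m)" using X(5) assms(4)
    by (auto simp: dadd_def dsub_def dle_def fun_eq_iff)
  then obtain l1 \<nu> where Y: "l1 \<in> Mor G" "\<nu> \<in> Mor G" "src G l1 = rng G \<nu>" "X = cmp G l1 \<nu>" "deg G l1 = m"
     "deg G \<nu> = dsub n m"
    using kg_fact_ex[OF X(1) assms(2) ds_dsub[OF assms(3)]] by metis
  have "src G \<nu> = rng G l2" using X Y kg_cmp by metis
  then show ?thesis using that X Y by blast
qed

lemma kg_seg_eq:
  assumes "l1 \<in> Mor G" "\<nu> \<in> Mor G" "l2 \<in> Mor G" "src G l1 = rng G \<nu>"
    "src G \<nu> = rng G l2" "l = cmp G (cmp G l1 \<nu>) l2" "deg G l1 = m" "deg G \<nu> = dsub n m"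
    "m \<in> deg_space k" "n \<in> deg_space k" "dle m n"
  shows "seg G l m n = \<nu>"
  unfolding seg_def
proof (rule the_equality)
  show "\<nu> \<in> Mor G \<and> (\<exists>l1\<in>Mor G. \<exists>l2\<in>Mor G. src G l1 = rng G \<nu> \<and> src G \<nu> = rng G l2 \<and>
       l = cmp G (cmp G l1 \<nu>) l2 \<and> deg G l1 = m \<and> deg G \<nu> = dsub n m)" using assms by blast
next
  fix \<nu>' assume "\<nu>' \<in> Mor G \<and> (\<exists>l1\<in>Mor G. \<exists>l2\<in>Mor G. src G l1 = rng G \<nu>' \<and> src G \<nu>' = rng G l2 \<and>
       l = cmp G (cmp G l1 \<nu>') l2 \<and> deg G l1 = m \<and> deg G \<nu>' = dsub n m)"
  then obtain l1' l2' where B: "\<nu>' \<in> Mor G" "l1' \<in> Mor G" "l2' \<in> Mor G" "src G l1' = rng G \<nu>'"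
    "src G \<nu>' = rng G l2'" "l = cmp G (cmp G l1' \<nu>') l2'" "deg G l1' = m" "deg G \<nu>' = dsub n m" by blast
  have X: "cmp G l1 \<nu> \<in> Mor G" "src G (cmp G l1 \<nu>) = rng G l2" "deg G (cmp G l1 \<nu>) = n"
    using assms kg_cmp kg_deg(3)[of l1 \<nu>] by (auto simp: dadd_def dsub_def dle_def fun_eq_iff)
  have X': "cmp G l1' \<nu>' \<in> Mor G" "src G (cmp G l1' \<nu>') = rng G l2'" "deg G (cmp G l1' \<nu>') = n"
    using B assms(11) kg_cmp kg_deg(3)[of l1' \<nu>'] by (auto simp: dadd_def dsub_def dle_def fun_eq_iff)
  have lM: "l \<in> Mor G" using X assms kg_cmp by metis
  have d1: "deg G l = dadd n (deg G l2)" using X assms kg_deg(3) by metis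
  have d2: "deg G l = dadd n (deg G l2')" using X' B kg_deg(3) by metis
  have "deg G l2 = deg G l2'" using d1 d2 by (auto simp: dadd_def fun_eq_iff)
  then have "cmp G l1 \<nu> = cmp G l1' \<nu>' \<and> l2 = l2'"
    apply (intro kg_fact_uniq[OF lM assms(10) kg_deg(1)[OF assms(3)]])
    using X X' assms B by simp_all
  then have "l1 = l1' \<and> \<nu> = \<nu>'"
    apply (intro kg_fact_uniq[OF X(1) assms(9) ds_dsub[OF assms(10)]])
    using X X' assms B by simp_all
  then show "\<nu>' = \<nu>" by simp
qed

end


lemma cmb_ds: "d2 \<in> deg_space k2 \<Longrightarrow> cmb k1 d1 d2 \<in> deg_space (k1 + k2)"
  by (auto simp: cmb_def deg_space_def)
lemma pr1_ds: "pr1 k1 d \<in> deg_space k1"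
  by (auto simp: pr1_def deg_space_def)
lemma pr2_ds: "d \<in> deg_space (k1 + k2) \<Longrightarrow> pr2 k1 d \<in> deg_space k2"
  by (auto simp: pr2_def deg_space_def)
lemma cmb_pr: "cmb k1 (pr1 k1 d) (pr2 k1 d) = d"
  by (auto simp: cmb_def pr1_def pr2_def fun_eq_iff)
lemma pr1_cmb: "d1 \<in> deg_space k1 \<Longrightarrow> pr1 k1 (cmb k1 d1 d2) = d1"
  by (auto simp: cmb_def pr1_def deg_space_def fun_eq_iff)
lemma pr2_cmb: "pr2 k1 (cmb k1 d1 d2) = d2"
  by (auto simp: cmb_def pr2_def fun_eq_iff)
lemma cmb_eq_iff: "d1 \<in> deg_space k1 \<Longrightarrow> e1 \<in> deg_space k1 \<Longrightarrow>
   cmb k1 d1 d2 = cmb k1 e1 e2 \<longleftrightarrow> d1 = e1 \<and> d2 = e2"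
  by (metis pr1_cmb pr2_cmb)
lemma cmb_dadd: "cmb k1 (dadd a b) (dadd c d) = dadd (cmb k1 a c) (cmb k1 b d)"
  by (auto simp: cmb_def dadd_def fun_eq_iff)
lemma cmb_dsub: "cmb k1 (dsub a b) (dsub c d) = dsub (cmb k1 a c) (cmb k1 b d)"
  by (auto simp: cmb_def dsub_def fun_eq_iff)
lemma cmb_djoin: "cmb k1 (djoin a b) (djoin c d) = djoin (cmb k1 a c) (cmb k1 b d)"
  by (auto simp: cmb_def djoin_def fun_eq_iff)
lemma cmb_dle: "dle (cmb k1 a c) (cmb k1 b d) \<longleftrightarrow> dle (pr1 k1 a) (pr1 k1 b) \<and> dle c d"
  apply (auto simp: cmb_def dle_def pr1_def)
  apply (metis add_diff_cancel_right' not_add_less2)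
  done
lemma cmb_zero: "cmb k1 (\<lambda>_. 0) (\<lambda>_. 0) = (\<lambda>_. 0)"
  by (auto simp: cmb_def fun_eq_iff)

context
  fixes k1 k2 :: nat and G1 :: "('v1, 'a1) kgraph" and G2 :: "('v2, 'a2) kgraph"
  assumes kg1: "is_kgraph k1 G1" and kg2: "is_kgraph k2 G2"
begin

lemma prod_fact:
  assumes "a \<in> Mor G1" "b \<in> Mor G2" "m \<in> deg_space (k1 + k2)" "n \<in> deg_space (k1 + k2)"
    "deg (kg_product k1 G1 G2) (a, b) = dadd m n"
  shows "\<exists>!p. fst p \<in> Mor (kg_product k1 G1 G2) \<and> snd p \<in> Mor (kg_product k1 G1 G2) \<and>
     src (kg_product k1 G1 G2) (fst p) = rng (kg_product k1 G1 G2) (snd p) \<and>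
     (a, b) = cmp (kg_product k1 G1 G2) (fst p) (snd p) \<and> deg (kg_product k1 G1 G2) (fst p) = m \<and>
     deg (kg_product k1 G1 G2) (snd p) = n"
proof -
  have e: "cmb k1 (deg G1 a) (deg G2 b) = cmb k1 (dadd (pr1 k1 m) (pr1 k1 n)) (dadd (pr2 k1 m) (pr2 k1 n))"
    using assms(5) by (simp add: kgp_simps cmb_dadd cmb_pr)
  have ds: "dadd (pr1 k1 m) (pr1 k1 n) \<in> deg_space k1" using pr1_ds[of k1 m] pr1_ds[of k1 n]
    by (auto simp: deg_space_def dadd_def)
  from e have da: "deg G1 a = dadd (pr1 k1 m) (pr1 k1 n)" and db: "deg G2 b = dadd (pr2 k1 m) (pr2 k1 n)"
    using cmb_eq_iff[OF kg_deg(1)[OF kg1 assms(1)] ds] by auto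
  obtain q1 where q1: "fst q1 \<in> Mor G1 \<and> snd q1 \<in> Mor G1 \<and> src G1 (fst q1) = rng G1 (snd q1) \<and>
              a = cmp G1 (fst q1) (snd q1) \<and> deg G1 (fst q1) = pr1 k1 m \<and> deg G1 (snd q1) = pr1 k1 n"
    and u1: "\<And>q. fst q \<in> Mor G1 \<and> snd q \<in> Mor G1 \<and> src G1 (fst q) = rng G1 (snd q) \<and>
              a = cmp G1 (fst q) (snd q) \<and> deg G1 (fst q) = pr1 k1 m \<and> deg G1 (snd q) = pr1 k1 n \<Longrightarrow> q = q1"
    using kg_fact[OF kg1 assms(1) pr1_ds pr1_ds da] by metis
  obtain q2 where q2: "fst q2 \<in> Mor G2 \<and> snd q2 \<in> Mor G2 \<and> src G2 (fst q2) = rng G2 (snd q2) \<and>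
              b = cmp G2 (fst q2) (snd q2) \<and> deg G2 (fst q2) = pr2 k1 m \<and> deg G2 (snd q2) = pr2 k1 n"
    and u2: "\<And>q. fst q \<in> Mor G2 \<and> snd q \<in> Mor G2 \<and> src G2 (fst q) = rng G2 (snd q) \<and>
              b = cmp G2 (fst q) (snd q) \<and> deg G2 (fst q) = pr2 k1 m \<and> deg G2 (snd q) = pr2 k1 n \<Longrightarrow> q = q2"
    using kg_fact[OF kg2 assms(2) pr2_ds[OF assms(3)] pr2_ds[OF assms(4)] db] by metis
  show ?thesis
  proof (rule ex1I[of _ "((fst q1, fst q2), (snd q1, snd q2))"])
    show "fst ((fst q1, fst q2), snd q1, snd q2) \<in> Mor (kg_product k1 G1 G2) \<and>
    snd ((fst q1, fst q2), snd q1, snd q2) \<in> Mor (kg_product k1 G1 G2) \<and>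
    src (kg_product k1 G1 G2) (fst ((fst q1, fst q2), snd q1, snd q2)) =
    rng (kg_product k1 G1 G2) (snd ((fst q1, fst q2), snd q1, snd q2)) \<and>
    (a, b) = cmp (kg_product k1 G1 G2) (fst ((fst q1, fst q2), snd q1, snd q2))
              (snd ((fst q1, fst q2), snd q1, snd q2)) \<and>
    deg (kg_product k1 G1 G2) (fst ((fst q1, fst q2), snd q1, snd q2)) = m \<and>
    deg (kg_product k1 G1 G2) (snd ((fst q1, fst q2), snd q1, snd q2)) = n"
      using q1 q2 by (simp add: kgp_simps cmb_pr)
  next
    fix p assume p: "fst p \<in> Mor (kg_product k1 G1 G2) \<and> snd p \<in> Mor (kg_product k1 G1 G2) \<and>
     src (kg_product k1 G1 G2) (fst p) = rng (kg_product k1 G1 G2) (snd p) \<and>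
     (a, b) = cmp (kg_product k1 G1 G2) (fst p) (snd p) \<and> deg (kg_product k1 G1 G2) (fst p) = m \<and>
     deg (kg_product k1 G1 G2) (snd p) = n"
    obtain x1 y1 x2 y2 where pe: "p = ((x1, y1), (x2, y2))" by (metis prod.collapse)
    have h: "x1 \<in> Mor G1" "y1 \<in> Mor G2" "x2 \<in> Mor G1" "y2 \<in> Mor G2" "src G1 x1 = rng G1 x2"
      "src G2 y1 = rng G2 y2" "a = cmp G1 x1 x2" "b = cmp G2 y1 y2"
      "cmb k1 (deg G1 x1) (deg G2 y1) = m" "cmb k1 (deg G1 x2) (deg G2 y2) = n"
      using p unfolding pe by (simp_all add: kgp_simps)
    have "deg G1 x1 = pr1 k1 m" "deg G2 y1 = pr2 k1 m" "deg G1 x2 = pr1 k1 n" "deg G2 y2 = pr2 k1 n"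
      using h(9,10) pr1_cmb[OF kg_deg(1)[OF kg1 h(1)]] pr1_cmb[OF kg_deg(1)[OF kg1 h(3)]] pr2_cmb
      by metis+
    then have "(x1, x2) = q1" "(y1, y2) = q2" using h by (auto intro!: u1 u2)
    then show "p = ((fst q1, fst q2), snd q1, snd q2)" using pe by auto
  qed
qed

lemma prod_kgraph: "is_kgraph (k1 + k2) (kg_product k1 G1 G2)"
proof -
  note c1 = kgc[OF kg1] and c2 = kgc[OF kg2]
  show ?thesis
    unfolding is_kgraph_def
  proof (intro conjI)
    show "countable (Obj (kg_product k1 G1 G2))" "countable (Mor (kg_product k1 G1 G2))"
      using c1 c2 by (simp_all add: kgp_simps)
    show "\<forall>l\<in>Mor (kg_product k1 G1 G2). rng (kg_product k1 G1 G2) l \<in> Obj (kg_product k1 G1 G2) \<and>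
        src (kg_product k1 G1 G2) l \<in> Obj (kg_product k1 G1 G2)"
      by (auto simp: kgp_simps kg_rng[OF kg1] kg_rng[OF kg2] kg_src[OF kg1] kg_src[OF kg2])
    show "\<forall>v\<in>Obj (kg_product k1 G1 G2). idm (kg_product k1 G1 G2) v \<in> Mor (kg_product k1 G1 G2) \<and>
        rng (kg_product k1 G1 G2) (idm (kg_product k1 G1 G2) v) = v \<and>
        src (kg_product k1 G1 G2) (idm (kg_product k1 G1 G2) v) = v"
      by (auto simp: kgp_simps kg_idm[OF kg1] kg_idm[OF kg2])
    show "\<forall>\<mu>\<in>Mor (kg_product k1 G1 G2). \<forall>\<nu>\<in>Mor (kg_product k1 G1 G2).
       src (kg_product k1 G1 G2) \<mu> = rng (kg_product k1 G1 G2) \<nu> \<longrightarrow>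
       cmp (kg_product k1 G1 G2) \<mu> \<nu> \<in> Mor (kg_product k1 G1 G2) \<and>
       rng (kg_product k1 G1 G2) (cmp (kg_product k1 G1 G2) \<mu> \<nu>) = rng (kg_product k1 G1 G2) \<mu> \<and>
       src (kg_product k1 G1 G2) (cmp (kg_product k1 G1 G2) \<mu> \<nu>) = src (kg_product k1 G1 G2) \<nu>"
      by (auto simp: kgp_simps kg_cmp[OF kg1] kg_cmp[OF kg2])
    show "\<forall>l\<in>Mor (kg_product k1 G1 G2).
       cmp (kg_product k1 G1 G2) (idm (kg_product k1 G1 G2) (rng (kg_product k1 G1 G2) l)) l = l \<and>
       cmp (kg_product k1 G1 G2) l (idm (kg_product k1 G1 G2) (src (kg_product k1 G1 G2) l)) = l"
      by (auto simp: kgp_simps kg_idlr[OF kg1] kg_idlr[OF kg2])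
    show "\<forall>\<alpha>\<in>Mor (kg_product k1 G1 G2). \<forall>\<mu>\<in>Mor (kg_product k1 G1 G2). \<forall>\<nu>\<in>Mor (kg_product k1 G1 G2).
       src (kg_product k1 G1 G2) \<alpha> = rng (kg_product k1 G1 G2) \<mu> \<longrightarrow>
       src (kg_product k1 G1 G2) \<mu> = rng (kg_product k1 G1 G2) \<nu> \<longrightarrow>
       cmp (kg_product k1 G1 G2) (cmp (kg_product k1 G1 G2) \<alpha> \<mu>) \<nu> =
       cmp (kg_product k1 G1 G2) \<alpha> (cmp (kg_product k1 G1 G2) \<mu> \<nu>)"
      using c1 c2 by (auto simp: kgp_simps)
    show "\<forall>l\<in>Mor (kg_product k1 G1 G2). deg (kg_product k1 G1 G2) l \<in> deg_space (k1 + k2)"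
      by (auto simp: kgp_simps kg_deg(1)[OF kg2] cmb_ds)
    show "\<forall>v\<in>Obj (kg_product k1 G1 G2). deg (kg_product k1 G1 G2) (idm (kg_product k1 G1 G2) v) = (\<lambda>_. 0)"
      by (auto simp: kgp_simps kg_deg(2)[OF kg1] kg_deg(2)[OF kg2] cmb_zero)
    show "\<forall>\<mu>\<in>Mor (kg_product k1 G1 G2). \<forall>\<nu>\<in>Mor (kg_product k1 G1 G2).
       src (kg_product k1 G1 G2) \<mu> = rng (kg_product k1 G1 G2) \<nu> \<longrightarrow>
       deg (kg_product k1 G1 G2) (cmp (kg_product k1 G1 G2) \<mu> \<nu>) =
       dadd (deg (kg_product k1 G1 G2) \<mu>) (deg (kg_product k1 G1 G2) \<nu>)"
      by (auto simp: kgp_simps kg_deg(3)[OF kg1] kg_deg(3)[OF kg2] cmb_dadd)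
    show "\<forall>l\<in>Mor (kg_product k1 G1 G2). \<forall>m\<in>deg_space (k1 + k2). \<forall>n\<in>deg_space (k1 + k2).
       deg (kg_product k1 G1 G2) l = dadd m n \<longrightarrow>
       (\<exists>!p. fst p \<in> Mor (kg_product k1 G1 G2) \<and> snd p \<in> Mor (kg_product k1 G1 G2) \<and>
              src (kg_product k1 G1 G2) (fst p) = rng (kg_product k1 G1 G2) (snd p) \<and>
              l = cmp (kg_product k1 G1 G2) (fst p) (snd p) \<and>
              deg (kg_product k1 G1 G2) (fst p) = m \<and> deg (kg_product k1 G1 G2) (snd p) = n)"
      using prod_fact by (auto simp: kgp_simps)
  qed
qed

end


definition APH :: "nat \<Rightarrow> ('v, 'a, 'z) kgraph_scheme \<Rightarrow> 'v set \<Rightarrow> bool" where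
  "APH k G H \<longleftrightarrow> (\<forall>v\<in>Obj G - H. \<forall>m\<in>deg_space k. \<forall>n\<in>deg_space k. m \<noteq> n \<longrightarrow>
       (\<exists>l\<in>Mor G. src G l \<notin> H \<and> rng G l = v \<and> dle (djoin m n) (deg G l) \<and>
          seg G l m (dadd m (dsub (deg G l) (djoin m n))) \<noteq>
          seg G l n (dadd n (dsub (deg G l) (djoin m n)))))"

lemma aperiodic_APH: "aperiodic k G \<longleftrightarrow> APH k G {}"
  unfolding aperiodic_def APH_def no_local_periodicity_def by simp

lemma seg_restrict:
  assumes kg: "is_kgraph k G" and hd: "hereditary G H" and l: "l \<in> Mor G" "src G l \<notin> H"
  shows "seg (restrict_kg G H) l m n = seg G l m n"
proof -
  have nh: "\<And>x. x \<in> Mor G \<Longrightarrow> src G x \<notin> H \<Longrightarrow> rng G x \<notin> H" using hd unfolding hereditary_def by blast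
  have eq: "\<And>\<nu>. (\<nu> \<in> Mor G \<and> src G \<nu> \<notin> H \<and> (\<exists>l1\<in>{l \<in> Mor G. src G l \<notin> H}. \<exists>l2\<in>{l \<in> Mor G. src G l \<notin> H}.
       src G l1 = rng G \<nu> \<and> src G \<nu> = rng G l2 \<and>
       l = cmp G (cmp G l1 \<nu>) l2 \<and> deg G l1 = m \<and> deg G \<nu> = dsub n m)) =
      (\<nu> \<in> Mor G \<and> (\<exists>l1\<in>Mor G. \<exists>l2\<in>Mor G.
       src G l1 = rng G \<nu> \<and> src G \<nu> = rng G l2 \<and>
       l = cmp G (cmp G l1 \<nu>) l2 \<and> deg G l1 = m \<and> deg G \<nu> = dsub n m))"
  proof (rule iffI)
    fix \<nu>
    assume "\<nu> \<in> Mor G \<and> (\<exists>l1\<in>Mor G. \<exists>l2\<in>Mor G.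
       src G l1 = rng G \<nu> \<and> src G \<nu> = rng G l2 \<and>
       l = cmp G (cmp G l1 \<nu>) l2 \<and> deg G l1 = m \<and> deg G \<nu> = dsub n m)"
    then obtain l1 l2 where h: "\<nu> \<in> Mor G" "l1 \<in> Mor G" "l2 \<in> Mor G" "src G l1 = rng G \<nu>" "src G \<nu> = rng G l2"
       "l = cmp G (cmp G l1 \<nu>) l2" "deg G l1 = m" "deg G \<nu> = dsub n m" by blast
    have c: "cmp G l1 \<nu> \<in> Mor G" "src G (cmp G l1 \<nu>) = src G \<nu>" using h kg_cmp[OF kg] by auto
    have "src G l = src G l2" using h c kg_cmp(3)[OF kg, of "cmp G l1 \<nu>" l2] by simp
    then have s2: "src G l2 \<notin> H" using l by simp
    then have s\<nu>: "src G \<nu> \<notin> H" using nh h by metis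
    then have s1: "src G l1 \<notin> H" using nh h by metis
    show "\<nu> \<in> Mor G \<and> src G \<nu> \<notin> H \<and> (\<exists>l1\<in>{l \<in> Mor G. src G l \<notin> H}. \<exists>l2\<in>{l \<in> Mor G. src G l \<notin> H}.
       src G l1 = rng G \<nu> \<and> src G \<nu> = rng G l2 \<and>
       l = cmp G (cmp G l1 \<nu>) l2 \<and> deg G l1 = m \<and> deg G \<nu> = dsub n m)"
      using h s1 s2 s\<nu> by blast
  qed blast
  show ?thesis unfolding seg_def restrict_kg_def
    apply simp
    apply (rule arg_cong[where f=The])
    apply (rule ext)
    subgoal for \<nu> using eq[of \<nu>] by blast
    done
qed

lemma restrict_simps: "Obj (restrict_kg G H) = Obj G - H" "Mor (restrict_kg G H) = {l \<in> Mor G. src G l \<notin> H}"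
  "rng (restrict_kg G H) = rng G" "src (restrict_kg G H) = src G" "deg (restrict_kg G H) = deg G"
  by (simp_all add: restrict_kg_def)

lemma restrict_APH:
  assumes kg: "is_kgraph k G" and hd: "hereditary G H"
  shows "aperiodic k (restrict_kg G H) \<longleftrightarrow> APH k G H"
proof -
  have S: "\<And>l m n. l \<in> Mor G \<Longrightarrow> src G l \<notin> H \<Longrightarrow> seg (restrict_kg G H) l m n = seg G l m n"
    using seg_restrict[OF kg hd] by blast
  show ?thesis
  proof
    assume A: "aperiodic k (restrict_kg G H)"
    show "APH k G H" unfolding APH_def
    proof (intro ballI impI)
      fix v m n assume v: "v \<in> Obj G - H" and m: "m \<in> deg_space k" and n: "n \<in> deg_space k" and mn: "m \<noteq> n"
      from A v m n mn obtain l where l: "l \<in> Mor (restrict_kg G H)" "rng (restrict_kg G H) l = v"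
        "dle (djoin m n) (deg (restrict_kg G H) l)"
        "seg (restrict_kg G H) l m (dadd m (dsub (deg (restrict_kg G H) l) (djoin m n))) \<noteq>
          seg (restrict_kg G H) l n (dadd n (dsub (deg (restrict_kg G H) l) (djoin m n)))"
        unfolding aperiodic_def no_local_periodicity_def restrict_simps(1) by blast
      have l2: "l \<in> Mor G" "src G l \<notin> H" using l(1) unfolding restrict_simps by auto
      show "\<exists>l\<in>Mor G. src G l \<notin> H \<and> rng G l = v \<and> dle (djoin m n) (deg G l) \<and>
          seg G l m (dadd m (dsub (deg G l) (djoin m n))) \<noteq> seg G l n (dadd n (dsub (deg G l) (djoin m n)))"
        using l l2 S[OF l2] unfolding restrict_simps by metis
    qed
  next
    assume A: "APH k G H"
    show "aperiodic k (restrict_kg G H)" unfolding aperiodic_def no_local_periodicity_def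
    proof (intro ballI impI)
      fix v m n assume v: "v \<in> Obj (restrict_kg G H)" and m: "m \<in> deg_space k" and n: "n \<in> deg_space k" and mn: "m \<noteq> n"
      from A v m n mn obtain l where l: "l \<in> Mor G" "src G l \<notin> H" "rng G l = v" "dle (djoin m n) (deg G l)"
          "seg G l m (dadd m (dsub (deg G l) (djoin m n))) \<noteq> seg G l n (dadd n (dsub (deg G l) (djoin m n)))"
        unfolding APH_def restrict_simps(1) by blast
      show "\<exists>l\<in>Mor (restrict_kg G H). rng (restrict_kg G H) l = v \<and> dle (djoin m n) (deg (restrict_kg G H) l) \<and>
          seg (restrict_kg G H) l m (dadd m (dsub (deg (restrict_kg G H) l) (djoin m n))) \<noteq>
          seg (restrict_kg G H) l n (dadd n (dsub (deg (restrict_kg G H) l) (djoin m n)))"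
        apply (rule bexI[of _ l])
        using l S[OF l(1,2)] unfolding restrict_simps by auto
    qed
  qed
qed

lemma long_path:
  assumes kg: "is_kgraph k G" and A: "APH k G H" and v: "v \<in> Obj G" "v \<notin> H" and d: "d \<in> deg_space k"
  shows "\<exists>l\<in>Mor G. src G l \<notin> H \<and> rng G l = v \<and> dle d (deg G l)"
proof (cases "k = 0")
  case True
  then have "d = (\<lambda>_. 0)" using d by (auto simp: deg_space_def)
  then show ?thesis using v kg_idm[OF kg] kg_deg(2)[OF kg] by (intro bexI[of _ "idm G v"]) (auto simp: dle_def)
next
  case False
  let ?n = "dadd d (unit_deg 0)"
  have n: "?n \<in> deg_space k" "d \<noteq> ?n" using d False
    by (auto simp: deg_space_def dadd_def unit_deg_def fun_eq_iff)
  obtain l where "l \<in> Mor G" "src G l \<notin> H" "rng G l = v" "dle (djoin d ?n) (deg G l)"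
    using A v d n unfolding APH_def by blast
  then show ?thesis by (intro bexI[of _ l]) (auto simp: dle_def djoin_def)
qed

lemma ds_dadd: "a \<in> deg_space k \<Longrightarrow> b \<in> deg_space k \<Longrightarrow> dadd a b \<in> deg_space k"
  by (simp add: deg_space_def dadd_def)
lemma dle_cmb: "dle a c \<Longrightarrow> dle b d \<Longrightarrow> dle (cmb k1 a b) (cmb k1 c d)"
  by (simp add: dle_def cmb_def)
lemma dle_cmbD: assumes h1: "dle (cmb k1 a b) (cmb k1 c d)" and h2: "a \<in> deg_space k1" shows "dle a c"
  unfolding dle_def
proof (intro allI)
  fix i
  show "a i \<le> c i"
  proof (cases "i < k1")
    case True
    have "cmb k1 a b i \<le> cmb k1 c d i" using h1 by (simp add: dle_def)
    then show ?thesis using True by (simp add: cmb_def)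
  next
    case False then show ?thesis using h2 by (simp add: deg_space_def)
  qed
qed
lemma dle_cmbD2: "dle (cmb k1 a b) (cmb k1 c d) \<Longrightarrow> dle b d"
  unfolding dle_def cmb_def
proof
  fix i assume "\<forall>i. (if i < k1 then a i else b (i - k1)) \<le> (if i < k1 then c i else d (i - k1))"
  then have "(if i + k1 < k1 then a (i + k1) else b (i + k1 - k1)) \<le> (if i + k1 < k1 then c (i + k1) else d (i + k1 - k1))"
    by (rule spec)
  then show "b i \<le> d i" by simp
qed
lemma pr1_expr: "d1 \<in> deg_space k1 \<Longrightarrow>
  pr1 k1 (dadd X (dsub (cmb k1 d1 d2) (djoin M N))) = dadd (pr1 k1 X) (dsub d1 (djoin (pr1 k1 M) (pr1 k1 N)))"
  by (auto simp: pr1_def dadd_def dsub_def cmb_def djoin_def deg_space_def fun_eq_iff)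
lemma pr2_expr:
  "pr2 k1 (dadd X (dsub (cmb k1 d1 d2) (djoin M N))) = dadd (pr2 k1 X) (dsub d2 (djoin (pr2 k1 M) (pr2 k1 N)))"
  by (auto simp: pr2_def dadd_def dsub_def cmb_def djoin_def fun_eq_iff)
lemma seg_bounds: assumes "dle (djoin M N) D"
  shows "dle M (dadd M (dsub D (djoin M N))) \<and> dle (dadd M (dsub D (djoin M N))) D
   \<and> dle N (dadd N (dsub D (djoin M N))) \<and> dle (dadd N (dsub D (djoin M N))) D"
proof -
  have h: "max (M i) (N i) \<le> D i" for i using assms unfolding dle_def djoin_def by blast
  have "M i + (D i - max (M i) (N i)) \<le> D i" "N i + (D i - max (M i) (N i)) \<le> D i" for i
    using h[of i] by linarith+
  then show ?thesis unfolding dle_def dadd_def dsub_def djoin_def by simp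
qed

context
  fixes k1 k2 :: nat and G1 :: "('v1, 'a1) kgraph" and G2 :: "('v2, 'a2) kgraph"
  assumes kg1: "is_kgraph k1 G1" and kg2: "is_kgraph k2 G2"
begin

lemma prod_paths: "(x, y) \<in> paths_from (kg_product k1 G1 G2) (v, w) d \<longleftrightarrow>
   x \<in> paths_from G1 v (pr1 k1 d) \<and> y \<in> paths_from G2 w (pr2 k1 d)"
  unfolding paths_from_def
  using pr1_cmb[OF kg_deg(1)[OF kg1]] pr2_cmb cmb_pr by (auto simp: kgp_simps)

lemma rfns_iff:
  assumes ne1: "Obj G1 \<noteq> {}" and ne2: "Obj G2 \<noteq> {}"
  shows "rfns_kgraph (k1 + k2) (kg_product k1 G1 G2) \<longleftrightarrow> rfns_kgraph k1 G1 \<and> rfns_kgraph k2 G2"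
proof -
  have z: "(\<lambda>_. 0) \<in> deg_space k" for k by (simp add: deg_space_def)
  have pz1: "pr1 k1 (\<lambda>_. 0) = (\<lambda>_. 0)" "pr2 k1 (\<lambda>_. 0) = (\<lambda>_. 0)" by (auto simp: pr1_def pr2_def)
  have idp1: "idm G1 v \<in> paths_from G1 v (\<lambda>_. 0)" if "v \<in> Obj G1" for v
    using that kg_idm[OF kg1] kg_deg(2)[OF kg1] by (simp add: paths_from_def)
  have idp2: "idm G2 v \<in> paths_from G2 v (\<lambda>_. 0)" if "v \<in> Obj G2" for v
    using that kg_idm[OF kg2] kg_deg(2)[OF kg2] by (simp add: paths_from_def)
  have rf: "row_finite (k1 + k2) (kg_product k1 G1 G2) \<longleftrightarrow> row_finite k1 G1 \<and> row_finite k2 G2"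
  proof safe
    assume R: "row_finite (k1 + k2) (kg_product k1 G1 G2)"
    show "row_finite k1 G1" unfolding row_finite_def
    proof (intro ballI)
      fix v d assume v: "v \<in> Obj G1" and d: "d \<in> deg_space k1"
      obtain w where w: "w \<in> Obj G2" using ne2 by blast
      have "finite (paths_from (kg_product k1 G1 G2) (v, w) (cmb k1 d (\<lambda>_. 0)))"
        using R v w cmb_ds[OF z] unfolding row_finite_def by (simp add: kgp_simps)
      moreover have "paths_from G1 v d \<subseteq> fst ` paths_from (kg_product k1 G1 G2) (v, w) (cmb k1 d (\<lambda>_. 0))"
      proof
        fix x assume "x \<in> paths_from G1 v d"
        then have "(x, idm G2 w) \<in> paths_from (kg_product k1 G1 G2) (v, w) (cmb k1 d (\<lambda>_. 0))"
          using prod_paths pr1_cmb[OF d] pr2_cmb idp2[OF w] by simp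
        then show "x \<in> fst ` paths_from (kg_product k1 G1 G2) (v, w) (cmb k1 d (\<lambda>_. 0))"
          by (metis fst_conv image_eqI)
      qed
      ultimately show "finite (paths_from G1 v d)" by (metis finite_surj)
    qed
    show "row_finite k2 G2" unfolding row_finite_def
    proof (intro ballI)
      fix w d assume w: "w \<in> Obj G2" and d: "d \<in> deg_space k2"
      obtain v where v: "v \<in> Obj G1" using ne1 by blast
      have "finite (paths_from (kg_product k1 G1 G2) (v, w) (cmb k1 (\<lambda>_. 0) d))"
        using R v w cmb_ds[OF d] unfolding row_finite_def by (simp add: kgp_simps)
      moreover have "paths_from G2 w d \<subseteq> snd ` paths_from (kg_product k1 G1 G2) (v, w) (cmb k1 (\<lambda>_. 0) d)"
      proof
        fix x assume "x \<in> paths_from G2 w d"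
        then have "(idm G1 v, x) \<in> paths_from (kg_product k1 G1 G2) (v, w) (cmb k1 (\<lambda>_. 0) d)"
          using prod_paths pr1_cmb[OF z] pr2_cmb idp1[OF v] by simp
        then show "x \<in> snd ` paths_from (kg_product k1 G1 G2) (v, w) (cmb k1 (\<lambda>_. 0) d)"
          by (metis snd_conv image_eqI)
      qed
      ultimately show "finite (paths_from G2 w d)" by (metis finite_surj)
    qed
  next
    assume R1: "row_finite k1 G1" and R2: "row_finite k2 G2"
    show "row_finite (k1 + k2) (kg_product k1 G1 G2)" unfolding row_finite_def
    proof (intro ballI)
      fix vw d assume vw: "vw \<in> Obj (kg_product k1 G1 G2)" and d: "d \<in> deg_space (k1 + k2)"
      obtain v w where e: "vw = (v, w)" "v \<in> Obj G1" "w \<in> Obj G2" using vw by (auto simp: kgp_simps)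
      have "paths_from (kg_product k1 G1 G2) (v, w) d \<subseteq> paths_from G1 v (pr1 k1 d) \<times> paths_from G2 w (pr2 k1 d)"
        using prod_paths by auto
      moreover have "finite (paths_from G1 v (pr1 k1 d) \<times> paths_from G2 w (pr2 k1 d))"
        using R1 R2 e pr1_ds pr2_ds[OF d] unfolding row_finite_def by blast
      ultimately show "finite (paths_from (kg_product k1 G1 G2) vw d)" using e finite_subset by blast
    qed
  qed
  have u1: "pr1 k1 (unit_deg i) = unit_deg i" "pr2 k1 (unit_deg i) = (\<lambda>_. 0)" if "i < k1" for i
    using that by (auto simp: pr1_def pr2_def unit_deg_def fun_eq_iff)
  have u2: "pr1 k1 (unit_deg i) = (\<lambda>_. 0)" "pr2 k1 (unit_deg i) = unit_deg (i - k1)" if "\<not> i < k1" for i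
    using that by (auto simp: pr1_def pr2_def unit_deg_def fun_eq_iff)
  have ns: "no_sources (k1 + k2) (kg_product k1 G1 G2) \<longleftrightarrow> no_sources k1 G1 \<and> no_sources k2 G2"
  proof safe
    assume N: "no_sources (k1 + k2) (kg_product k1 G1 G2)"
    show "no_sources k1 G1" unfolding no_sources_def
    proof (intro ballI allI impI)
      fix v i assume v: "v \<in> Obj G1" and i: "i < k1"
      obtain w where w: "w \<in> Obj G2" using ne2 by blast
      have "(v, w) \<in> Obj (kg_product k1 G1 G2)" "i < k1 + k2" using v w i by (simp_all add: kgp_simps)
      then have "paths_from (kg_product k1 G1 G2) (v, w) (unit_deg i) \<noteq> {}"
        using N unfolding no_sources_def by (erule_tac x="(v, w)" in ballE, auto)
      then obtain p where "p \<in> paths_from (kg_product k1 G1 G2) (v, w) (unit_deg i)" by blast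
      then show "paths_from G1 v (unit_deg i) \<noteq> {}"
        using prod_paths[of "fst p" "snd p"] u1[OF i] by auto
    qed
    show "no_sources k2 G2" unfolding no_sources_def
    proof (intro ballI allI impI)
      fix w i assume w: "w \<in> Obj G2" and i: "i < k2"
      obtain v where v: "v \<in> Obj G1" using ne1 by blast
      have "(v, w) \<in> Obj (kg_product k1 G1 G2)" "i + k1 < k1 + k2" using v w i by (simp_all add: kgp_simps)
      then have "paths_from (kg_product k1 G1 G2) (v, w) (unit_deg (i + k1)) \<noteq> {}"
        using N unfolding no_sources_def by (erule_tac x="(v, w)" in ballE, auto)
      then obtain p where "p \<in> paths_from (kg_product k1 G1 G2) (v, w) (unit_deg (i + k1))" by blast
      then show "paths_from G2 w (unit_deg i) \<noteq> {}"
        using prod_paths[of "fst p" "snd p"] u2[of "i + k1"] by auto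
    qed
  next
    assume N1: "no_sources k1 G1" and N2: "no_sources k2 G2"
    show "no_sources (k1 + k2) (kg_product k1 G1 G2)" unfolding no_sources_def
    proof (intro ballI allI impI)
      fix vw i assume vw: "vw \<in> Obj (kg_product k1 G1 G2)" and i: "i < k1 + k2"
      obtain v w where e: "vw = (v, w)" "v \<in> Obj G1" "w \<in> Obj G2" using vw by (auto simp: kgp_simps)
      show "paths_from (kg_product k1 G1 G2) vw (unit_deg i) \<noteq> {}"
      proof (cases "i < k1")
        case True
        then obtain x where "x \<in> paths_from G1 v (unit_deg i)" using N1 e unfolding no_sources_def by blast
        then have "(x, idm G2 w) \<in> paths_from (kg_product k1 G1 G2) vw (unit_deg i)"
          using prod_paths u1[OF True] idp2 e by simp
        then show ?thesis by blast
      next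
        case False
        have "i - k1 < k2" using False i by simp
        then obtain y where "y \<in> paths_from G2 w (unit_deg (i - k1))" using N2 e unfolding no_sources_def
          by blast
        then have "(idm G1 v, y) \<in> paths_from (kg_product k1 G1 G2) vw (unit_deg i)"
          using prod_paths u2[OF False] idp1 e by simp
        then show ?thesis by blast
      qed
    qed
  qed
  show ?thesis unfolding rfns_kgraph_def by (simp only: rf ns prod_kgraph[OF kg1 kg2] kg1 kg2 simp_thms conj_ac)
qed

lemma prod_seg:
  assumes a: "a \<in> Mor G1" and b: "b \<in> Mor G2" and m: "m \<in> deg_space (k1 + k2)" and n: "n \<in> deg_space (k1 + k2)"
    and mn: "dle m n" and nd: "dle n (cmb k1 (deg G1 a) (deg G2 b))"
  shows "seg (kg_product k1 G1 G2) (a, b) m n = (seg G1 a (pr1 k1 m) (pr1 k1 n), seg G2 b (pr2 k1 m) (pr2 k1 n))"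
proof -
  have b1: "dle (pr1 k1 m) (pr1 k1 n)" "dle (pr2 k1 m) (pr2 k1 n)" using mn
    by (auto simp: dle_def pr1_def pr2_def)
  have b2: "dle (pr1 k1 n) (deg G1 a)" unfolding dle_def pr1_def
  proof
    fix i have "n i \<le> cmb k1 (deg G1 a) (deg G2 b) i" using nd by (simp add: dle_def)
    then show "(if i < k1 then n i else 0) \<le> deg G1 a i" by (simp add: cmb_def split: if_splits)
  qed
  have b3: "dle (pr2 k1 n) (deg G2 b)" unfolding dle_def pr2_def
  proof
    fix i have "n (i + k1) \<le> cmb k1 (deg G1 a) (deg G2 b) (i + k1)" using nd by (simp add: dle_def)
    then show "n (i + k1) \<le> deg G2 b i" by (simp add: cmb_def)
  qed
  obtain x1 \<nu>1 y1 where F1: "x1 \<in> Mor G1" "\<nu>1 \<in> Mor G1" "y1 \<in> Mor G1" "src G1 x1 = rng G1 \<nu>1"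
    "src G1 \<nu>1 = rng G1 y1" "a = cmp G1 (cmp G1 x1 \<nu>1) y1" "deg G1 x1 = pr1 k1 m" "deg G1 \<nu>1 = dsub (pr1 k1 n) (pr1 k1 m)"
    using kg_seg_ex[OF kg1 a pr1_ds pr1_ds b1(1) b2] by metis
  obtain x2 \<nu>2 y2 where F2: "x2 \<in> Mor G2" "\<nu>2 \<in> Mor G2" "y2 \<in> Mor G2" "src G2 x2 = rng G2 \<nu>2"
    "src G2 \<nu>2 = rng G2 y2" "b = cmp G2 (cmp G2 x2 \<nu>2) y2" "deg G2 x2 = pr2 k1 m" "deg G2 \<nu>2 = dsub (pr2 k1 n) (pr2 k1 m)"
    using kg_seg_ex[OF kg2 b pr2_ds[OF m] pr2_ds[OF n] b1(2) b3] by metis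
  have s1: "seg G1 a (pr1 k1 m) (pr1 k1 n) = \<nu>1" using kg_seg_eq[OF kg1 F1 pr1_ds pr1_ds b1(1)] .
  have s2: "seg G2 b (pr2 k1 m) (pr2 k1 n) = \<nu>2" using kg_seg_eq[OF kg2 F2 pr2_ds[OF m] pr2_ds[OF n] b1(2)] .
  have P: "(x1, x2) \<in> Mor (kg_product k1 G1 G2)" "(\<nu>1, \<nu>2) \<in> Mor (kg_product k1 G1 G2)"
    "(y1, y2) \<in> Mor (kg_product k1 G1 G2)"
    "src (kg_product k1 G1 G2) (x1, x2) = rng (kg_product k1 G1 G2) (\<nu>1, \<nu>2)"
    "src (kg_product k1 G1 G2) (\<nu>1, \<nu>2) = rng (kg_product k1 G1 G2) (y1, y2)"
    using F1(1-5) F2(1-5) by (simp_all only: kgp_simps mem_Times_iff fst_conv snd_conv prod.inject)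
  have P2: "(a, b) = cmp (kg_product k1 G1 G2) (cmp (kg_product k1 G1 G2) (x1, x2) (\<nu>1, \<nu>2)) (y1, y2)"
    unfolding kgp_simps using F1(6) F2(6) by (simp only:)
  have P3: "deg (kg_product k1 G1 G2) (\<nu>1, \<nu>2) = dsub n m"
    using F1(8) F2(8) by (simp add: kgp_simps cmb_dsub cmb_pr)
  have P4: "deg (kg_product k1 G1 G2) (x1, x2) = m"
    using F1(7) F2(7) by (simp add: kgp_simps cmb_pr)
  have S: "seg (kg_product k1 G1 G2) (a, b) m n = (\<nu>1, \<nu>2)"
    by (rule kg_seg_eq[OF prod_kgraph[OF kg1 kg2] P P2 P4 P3 m n mn])
  show ?thesis unfolding s1 s2 by (fact S)
qed


lemma prod_seg2:
  assumes l1: "l1 \<in> Mor G1" and l2: "l2 \<in> Mor G2" and M: "M \<in> deg_space (k1 + k2)" and N: "N \<in> deg_space (k1 + k2)"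
    and J: "dle (djoin M N) (cmb k1 (deg G1 l1) (deg G2 l2))"
  shows "seg (kg_product k1 G1 G2) (l1, l2) M (dadd M (dsub (cmb k1 (deg G1 l1) (deg G2 l2)) (djoin M N))) =
     (seg G1 l1 (pr1 k1 M) (dadd (pr1 k1 M) (dsub (deg G1 l1) (djoin (pr1 k1 M) (pr1 k1 N)))),
      seg G2 l2 (pr2 k1 M) (dadd (pr2 k1 M) (dsub (deg G2 l2) (djoin (pr2 k1 M) (pr2 k1 N)))))"
proof -
  let ?D = "cmb k1 (deg G1 l1) (deg G2 l2)"
  have D: "?D \<in> deg_space (k1 + k2)" using cmb_ds kg_deg(1)[OF kg2 l2] by blast
  have X: "dadd M (dsub ?D (djoin M N)) \<in> deg_space (k1 + k2)" using ds_dadd[OF M ds_dsub[OF prod_kgraph[OF kg1 kg2] D]] .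
  have b: "dle M (dadd M (dsub ?D (djoin M N)))" "dle (dadd M (dsub ?D (djoin M N))) ?D"
    using seg_bounds[OF J] by blast+
  show ?thesis
    using prod_seg[OF l1 l2 M X b] pr1_expr[OF kg_deg(1)[OF kg1 l1]] pr2_expr by simp
qed

lemma prod_seg3:
  assumes l1: "l1 \<in> Mor G1" and l2: "l2 \<in> Mor G2" and M: "M \<in> deg_space (k1 + k2)" and N: "N \<in> deg_space (k1 + k2)"
    and J: "dle (djoin M N) (cmb k1 (deg G1 l1) (deg G2 l2))"
  shows "seg (kg_product k1 G1 G2) (l1, l2) N (dadd N (dsub (cmb k1 (deg G1 l1) (deg G2 l2)) (djoin M N))) =
     (seg G1 l1 (pr1 k1 N) (dadd (pr1 k1 N) (dsub (deg G1 l1) (djoin (pr1 k1 M) (pr1 k1 N)))),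
      seg G2 l2 (pr2 k1 N) (dadd (pr2 k1 N) (dsub (deg G2 l2) (djoin (pr2 k1 M) (pr2 k1 N)))))"
proof -
  let ?D = "cmb k1 (deg G1 l1) (deg G2 l2)"
  have D: "?D \<in> deg_space (k1 + k2)" using cmb_ds kg_deg(1)[OF kg2 l2] by blast
  have X: "dadd N (dsub ?D (djoin M N)) \<in> deg_space (k1 + k2)" using ds_dadd[OF N ds_dsub[OF prod_kgraph[OF kg1 kg2] D]] .
  have b: "dle N (dadd N (dsub ?D (djoin M N)))" "dle (dadd N (dsub ?D (djoin M N))) ?D"
    using seg_bounds[OF J] by blast+
  show ?thesis
    using prod_seg[OF l1 l2 N X b] pr1_expr[OF kg_deg(1)[OF kg1 l1]] pr2_expr by simp
qed

lemma djoin_cmb: "djoin M N = cmb k1 (djoin (pr1 k1 M) (pr1 k1 N)) (djoin (pr2 k1 M) (pr2 k1 N))"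
  by (metis cmb_djoin cmb_pr)

lemma core:
  assumes A1: "\<forall>w\<in>Obj G2. APH k1 G1 {a \<in> Obj G1. (a, w) \<in> H}"
      and A2: "\<forall>a\<in>Obj G1. APH k2 G2 {b \<in> Obj G2. (a, b) \<in> H}"
  shows "APH (k1 + k2) (kg_product k1 G1 G2) H"
  unfolding APH_def
proof (intro ballI impI)
  fix vw M N assume vw: "vw \<in> Obj (kg_product k1 G1 G2) - H" and M: "M \<in> deg_space (k1 + k2)"
    and N: "N \<in> deg_space (k1 + k2)" and MN: "M \<noteq> N"
  obtain v w where e: "vw = (v, w)" "v \<in> Obj G1" "w \<in> Obj G2" "(v, w) \<notin> H" using vw by (auto simp: kgp_simps)
  have key: "\<exists>l\<in>Mor (kg_product k1 G1 G2). src (kg_product k1 G1 G2) l \<notin> H \<and> rng (kg_product k1 G1 G2) l = vw \<and>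
      dle (djoin M N) (deg (kg_product k1 G1 G2) l) \<and>
      seg (kg_product k1 G1 G2) l M (dadd M (dsub (deg (kg_product k1 G1 G2) l) (djoin M N))) \<noteq>
      seg (kg_product k1 G1 G2) l N (dadd N (dsub (deg (kg_product k1 G1 G2) l) (djoin M N)))"
    if l1: "l1 \<in> Mor G1" and l2: "l2 \<in> Mor G2" and s: "(src G1 l1, src G2 l2) \<notin> H"
      and r: "rng G1 l1 = v" "rng G2 l2 = w"
      and d1: "dle (djoin (pr1 k1 M) (pr1 k1 N)) (deg G1 l1)"
      and d2: "dle (djoin (pr2 k1 M) (pr2 k1 N)) (deg G2 l2)"
      and df: "seg G1 l1 (pr1 k1 M) (dadd (pr1 k1 M) (dsub (deg G1 l1) (djoin (pr1 k1 M) (pr1 k1 N)))) \<noteq>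
               seg G1 l1 (pr1 k1 N) (dadd (pr1 k1 N) (dsub (deg G1 l1) (djoin (pr1 k1 M) (pr1 k1 N))))
             \<or> seg G2 l2 (pr2 k1 M) (dadd (pr2 k1 M) (dsub (deg G2 l2) (djoin (pr2 k1 M) (pr2 k1 N)))) \<noteq>
               seg G2 l2 (pr2 k1 N) (dadd (pr2 k1 N) (dsub (deg G2 l2) (djoin (pr2 k1 M) (pr2 k1 N))))"
    for l1 l2
  proof (rule bexI[of _ "(l1, l2)"])
    have J: "dle (djoin M N) (cmb k1 (deg G1 l1) (deg G2 l2))"
      by (subst djoin_cmb) (rule dle_cmb[OF d1 d2])
    show "(l1, l2) \<in> Mor (kg_product k1 G1 G2)" using l1 l2 by (simp add: kgp_simps)
    show "src (kg_product k1 G1 G2) (l1, l2) \<notin> H \<and> rng (kg_product k1 G1 G2) (l1, l2) = vw \<and>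
      dle (djoin M N) (deg (kg_product k1 G1 G2) (l1, l2)) \<and>
      seg (kg_product k1 G1 G2) (l1, l2) M (dadd M (dsub (deg (kg_product k1 G1 G2) (l1, l2)) (djoin M N))) \<noteq>
      seg (kg_product k1 G1 G2) (l1, l2) N (dadd N (dsub (deg (kg_product k1 G1 G2) (l1, l2)) (djoin M N)))"
      unfolding kgp_simps prod_seg2[OF l1 l2 M N J] prod_seg3[OF l1 l2 M N J]
      using s r e(1) J df by auto
  qed
  show "\<exists>l\<in>Mor (kg_product k1 G1 G2). src (kg_product k1 G1 G2) l \<notin> H \<and> rng (kg_product k1 G1 G2) l = vw \<and>
      dle (djoin M N) (deg (kg_product k1 G1 G2) l) \<and>
      seg (kg_product k1 G1 G2) l M (dadd M (dsub (deg (kg_product k1 G1 G2) l) (djoin M N))) \<noteq>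
      seg (kg_product k1 G1 G2) l N (dadd N (dsub (deg (kg_product k1 G1 G2) l) (djoin M N)))"
  proof (cases "pr1 k1 M = pr1 k1 N")
    case False
    have "v \<in> Obj G1 - {a \<in> Obj G1. (a, w) \<in> H}" using e by simp
    then obtain l1 where l1: "l1 \<in> Mor G1" "src G1 l1 \<notin> {a \<in> Obj G1. (a, w) \<in> H}" "rng G1 l1 = v"
        "dle (djoin (pr1 k1 M) (pr1 k1 N)) (deg G1 l1)"
        "seg G1 l1 (pr1 k1 M) (dadd (pr1 k1 M) (dsub (deg G1 l1) (djoin (pr1 k1 M) (pr1 k1 N)))) \<noteq>
         seg G1 l1 (pr1 k1 N) (dadd (pr1 k1 N) (dsub (deg G1 l1) (djoin (pr1 k1 M) (pr1 k1 N))))"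
      using A1 e(3) pr1_ds False unfolding APH_def by blast
    have s1: "src G1 l1 \<in> Obj G1" using kg_src[OF kg1 l1(1)] .
    then have "(src G1 l1, w) \<notin> H" using l1(2) by simp
    then have w2: "w \<in> Obj G2 - {b \<in> Obj G2. (src G1 l1, b) \<in> H}" using e by simp
    have dj: "djoin (pr2 k1 M) (pr2 k1 N) \<in> deg_space k2" using pr2_ds[OF M] pr2_ds[OF N]
      by (simp add: deg_space_def djoin_def)
    obtain l2 where l2: "l2 \<in> Mor G2" "src G2 l2 \<notin> {b \<in> Obj G2. (src G1 l1, b) \<in> H}" "rng G2 l2 = w"
       "dle (djoin (pr2 k1 M) (pr2 k1 N)) (deg G2 l2)"
      using long_path[OF kg2 A2[rule_format, OF s1] _ _ dj] w2 by blast
    have "(src G1 l1, src G2 l2) \<notin> H" using l2(2) kg_src[OF kg2 l2(1)] by simp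
    then show ?thesis using key[OF l1(1) l2(1) _ l1(3) l2(3) l1(4) l2(4)] l1(5) by blast
  next
    case True
    have F: "pr2 k1 M \<noteq> pr2 k1 N" using True MN cmb_pr by metis
    have "w \<in> Obj G2 - {b \<in> Obj G2. (v, b) \<in> H}" using e by simp
    then obtain l2 where l2: "l2 \<in> Mor G2" "src G2 l2 \<notin> {b \<in> Obj G2. (v, b) \<in> H}" "rng G2 l2 = w"
        "dle (djoin (pr2 k1 M) (pr2 k1 N)) (deg G2 l2)"
        "seg G2 l2 (pr2 k1 M) (dadd (pr2 k1 M) (dsub (deg G2 l2) (djoin (pr2 k1 M) (pr2 k1 N)))) \<noteq>
         seg G2 l2 (pr2 k1 N) (dadd (pr2 k1 N) (dsub (deg G2 l2) (djoin (pr2 k1 M) (pr2 k1 N))))"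
      using A2 e(2) pr2_ds[OF M] pr2_ds[OF N] F unfolding APH_def by blast
    have s2: "src G2 l2 \<in> Obj G2" using kg_src[OF kg2 l2(1)] .
    then have "(v, src G2 l2) \<notin> H" using l2(2) by simp
    then have v1: "v \<in> Obj G1 - {a \<in> Obj G1. (a, src G2 l2) \<in> H}" using e by simp
    have dj: "djoin (pr1 k1 M) (pr1 k1 N) \<in> deg_space k1" using pr1_ds[of k1 M] pr1_ds[of k1 N]
      by (simp add: deg_space_def djoin_def)
    obtain l1 where l1: "l1 \<in> Mor G1" "src G1 l1 \<notin> {a \<in> Obj G1. (a, src G2 l2) \<in> H}" "rng G1 l1 = v"
       "dle (djoin (pr1 k1 M) (pr1 k1 N)) (deg G1 l1)"
      using long_path[OF kg1 A1[rule_format, OF s2] _ _ dj] v1 by blast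
    have "(src G1 l1, src G2 l2) \<notin> H" using l1(2) kg_src[OF kg1 l1(1)] by simp
    then show ?thesis using key[OF l1(1) l2(1) _ l1(3) l2(3) l1(4) l2(4)] l2(5) by blast
  qed
qed

lemma decomp1:
  assumes ne: "Obj G2 \<noteq> {}" and A: "APH (k1 + k2) (kg_product k1 G1 G2) (H1 \<times> Obj G2)"
  shows "APH k1 G1 H1"
  unfolding APH_def
proof (intro ballI impI)
  fix v m n assume v: "v \<in> Obj G1 - H1" and m: "m \<in> deg_space k1" and n: "n \<in> deg_space k1" and mn: "m \<noteq> n"
  obtain w where w: "w \<in> Obj G2" using ne by blast
  have z: "(\<lambda>_. 0) \<in> deg_space k2" by (simp add: deg_space_def)
  let ?M = "cmb k1 m (\<lambda>_. 0)" and ?N = "cmb k1 n (\<lambda>_. 0)"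
  have M: "?M \<in> deg_space (k1 + k2)" "?N \<in> deg_space (k1 + k2)" using cmb_ds[OF z] by auto
  have MN: "?M \<noteq> ?N" using mn pr1_cmb[OF m] pr1_cmb[OF n] by metis
  have "(v, w) \<in> Obj (kg_product k1 G1 G2) - H1 \<times> Obj G2" using v w by (simp add: kgp_simps)
  then obtain l where l: "l \<in> Mor (kg_product k1 G1 G2)" "src (kg_product k1 G1 G2) l \<notin> H1 \<times> Obj G2"
    "rng (kg_product k1 G1 G2) l = (v, w)" "dle (djoin ?M ?N) (deg (kg_product k1 G1 G2) l)"
    "seg (kg_product k1 G1 G2) l ?M (dadd ?M (dsub (deg (kg_product k1 G1 G2) l) (djoin ?M ?N))) \<noteq>
     seg (kg_product k1 G1 G2) l ?N (dadd ?N (dsub (deg (kg_product k1 G1 G2) l) (djoin ?M ?N)))"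
    using A M MN unfolding APH_def by blast
  obtain l1 l2 where e: "l = (l1, l2)" "l1 \<in> Mor G1" "l2 \<in> Mor G2" using l(1) by (auto simp: kgp_simps)
  have J: "dle (djoin ?M ?N) (cmb k1 (deg G1 l1) (deg G2 l2))" using l(4) e by (simp add: kgp_simps)
  have p1: "pr1 k1 ?M = m" "pr1 k1 ?N = n" using pr1_cmb m n by auto
  have p2: "pr2 k1 ?M = pr2 k1 ?N" by (simp add: pr2_cmb)
  have dj: "djoin m n \<in> deg_space k1" using m n by (simp add: deg_space_def djoin_def)
  show "\<exists>l\<in>Mor G1. src G1 l \<notin> H1 \<and> rng G1 l = v \<and> dle (djoin m n) (deg G1 l) \<and>
          seg G1 l m (dadd m (dsub (deg G1 l) (djoin m n))) \<noteq> seg G1 l n (dadd n (dsub (deg G1 l) (djoin m n)))"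
  proof (rule bexI[OF _ e(2)], intro conjI)
    show "src G1 l1 \<notin> H1" using l(2) e kg_src[OF kg2 e(3)] by (simp add: kgp_simps)
    show "rng G1 l1 = v" using l(3) e by (simp add: kgp_simps)
    have "djoin ?M ?N = cmb k1 (djoin m n) (\<lambda>_. 0)" by (auto simp: cmb_def djoin_def fun_eq_iff)
    then show "dle (djoin m n) (deg G1 l1)" using J dle_cmbD[OF _ dj] by metis
    show "seg G1 l1 m (dadd m (dsub (deg G1 l1) (djoin m n))) \<noteq> seg G1 l1 n (dadd n (dsub (deg G1 l1) (djoin m n)))"
      using l(5) unfolding e kgp_simps prod_seg2[OF e(2,3) M J] prod_seg3[OF e(2,3) M J] p1 p2 by auto
  qed
qed

lemma decomp2:
  assumes ne: "Obj G1 \<noteq> {}" and A: "APH (k1 + k2) (kg_product k1 G1 G2) (Obj G1 \<times> H2)"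
  shows "APH k2 G2 H2"
  unfolding APH_def
proof (intro ballI impI)
  fix w m n assume w: "w \<in> Obj G2 - H2" and m: "m \<in> deg_space k2" and n: "n \<in> deg_space k2" and mn: "m \<noteq> n"
  obtain v where v: "v \<in> Obj G1" using ne by blast
  let ?M = "cmb k1 (\<lambda>_. 0) m" and ?N = "cmb k1 (\<lambda>_. 0) n"
  have M: "?M \<in> deg_space (k1 + k2)" "?N \<in> deg_space (k1 + k2)" using cmb_ds m n by auto
  have MN: "?M \<noteq> ?N" using mn pr2_cmb by metis
  have "(v, w) \<in> Obj (kg_product k1 G1 G2) - Obj G1 \<times> H2" using v w by (simp add: kgp_simps)
  then obtain l where l: "l \<in> Mor (kg_product k1 G1 G2)" "src (kg_product k1 G1 G2) l \<notin> Obj G1 \<times> H2"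
    "rng (kg_product k1 G1 G2) l = (v, w)" "dle (djoin ?M ?N) (deg (kg_product k1 G1 G2) l)"
    "seg (kg_product k1 G1 G2) l ?M (dadd ?M (dsub (deg (kg_product k1 G1 G2) l) (djoin ?M ?N))) \<noteq>
     seg (kg_product k1 G1 G2) l ?N (dadd ?N (dsub (deg (kg_product k1 G1 G2) l) (djoin ?M ?N)))"
    using A M MN unfolding APH_def by blast
  obtain l1 l2 where e: "l = (l1, l2)" "l1 \<in> Mor G1" "l2 \<in> Mor G2" using l(1) by (auto simp: kgp_simps)
  have J: "dle (djoin ?M ?N) (cmb k1 (deg G1 l1) (deg G2 l2))" using l(4) e by (simp add: kgp_simps)
  have z: "(\<lambda>_. 0) \<in> deg_space k1" by (simp add: deg_space_def)
  have p1: "pr1 k1 ?M = pr1 k1 ?N" using pr1_cmb[OF z] by simp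
  have p2: "pr2 k1 ?M = m" "pr2 k1 ?N = n" by (simp_all add: pr2_cmb)
  show "\<exists>l\<in>Mor G2. src G2 l \<notin> H2 \<and> rng G2 l = w \<and> dle (djoin m n) (deg G2 l) \<and>
          seg G2 l m (dadd m (dsub (deg G2 l) (djoin m n))) \<noteq> seg G2 l n (dadd n (dsub (deg G2 l) (djoin m n)))"
  proof (rule bexI[OF _ e(3)], intro conjI)
    show "src G2 l2 \<notin> H2" using l(2) e kg_src[OF kg1 e(2)] by (simp add: kgp_simps)
    show "rng G2 l2 = w" using l(3) e by (simp add: kgp_simps)
    have "djoin ?M ?N = cmb k1 (\<lambda>_. 0) (djoin m n)" by (auto simp: cmb_def djoin_def fun_eq_iff)
    then show "dle (djoin m n) (deg G2 l2)" using J dle_cmbD2 by metis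
    show "seg G2 l2 m (dadd m (dsub (deg G2 l2) (djoin m n))) \<noteq> seg G2 l2 n (dadd n (dsub (deg G2 l2) (djoin m n)))"
      using l(5) unfolding e kgp_simps prod_seg2[OF e(2,3) M J] prod_seg3[OF e(2,3) M J] p1 p2 by auto
  qed
qed


lemma idm_paths1: "v \<in> Obj G1 \<Longrightarrow> idm G1 v \<in> paths_from G1 v (\<lambda>_. 0)"
  using kg_idm[OF kg1] kg_deg(2)[OF kg1] by (simp add: paths_from_def)
lemma idm_paths2: "v \<in> Obj G2 \<Longrightarrow> idm G2 v \<in> paths_from G2 v (\<lambda>_. 0)"
  using kg_idm[OF kg2] kg_deg(2)[OF kg2] by (simp add: paths_from_def)
lemma pr_unit1: "i < k1 \<Longrightarrow> pr1 k1 (unit_deg i) = unit_deg i \<and> pr2 k1 (unit_deg i) = (\<lambda>_. 0)"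
  by (auto simp: pr1_def pr2_def unit_deg_def fun_eq_iff)
lemma pr_unit2: "\<not> i < k1 \<Longrightarrow> pr1 k1 (unit_deg i) = (\<lambda>_. 0) \<and> pr2 k1 (unit_deg i) = unit_deg (i - k1)"
  by (auto simp: pr1_def pr2_def unit_deg_def fun_eq_iff)

lemma her_times1: "hereditary G1 H1 \<Longrightarrow> hereditary (kg_product k1 G1 G2) (H1 \<times> Obj G2)"
  unfolding hereditary_def by (auto simp: kgp_simps kg_src[OF kg2])
lemma her_times2: "hereditary G2 H2 \<Longrightarrow> hereditary (kg_product k1 G1 G2) (Obj G1 \<times> H2)"
  unfolding hereditary_def by (auto simp: kgp_simps kg_src[OF kg1])

lemma sat_times1:
  assumes S: "saturated k1 G1 H1" and NS: "no_sources k2 G2"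
  shows "saturated (k1 + k2) (kg_product k1 G1 G2) (H1 \<times> Obj G2)"
  unfolding saturated_def
proof (intro ballI impI)
  fix vw assume vw: "vw \<in> Obj (kg_product k1 G1 G2)" and
    h: "(\<exists>l\<in>Mor (kg_product k1 G1 G2). rng (kg_product k1 G1 G2) l = vw) \<and>
       (\<exists>i<k1 + k2. src (kg_product k1 G1 G2) ` paths_from (kg_product k1 G1 G2) vw (unit_deg i) \<subseteq> H1 \<times> Obj G2)"
  obtain a b where e: "vw = (a, b)" "a \<in> Obj G1" "b \<in> Obj G2" using vw by (auto simp: kgp_simps)
  obtain i where i: "i < k1 + k2" and sub: "src (kg_product k1 G1 G2) ` paths_from (kg_product k1 G1 G2) (a, b) (unit_deg i) \<subseteq> H1 \<times> Obj G2"
    using h unfolding e(1) by blast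
  have "a \<in> H1"
  proof (cases "i < k1")
    case True
    have "src G1 ` paths_from G1 a (unit_deg i) \<subseteq> H1"
    proof
      fix z assume "z \<in> src G1 ` paths_from G1 a (unit_deg i)"
      then obtain x where x: "x \<in> paths_from G1 a (unit_deg i)" "z = src G1 x" by blast
      then have "(x, idm G2 b) \<in> paths_from (kg_product k1 G1 G2) (a, b) (unit_deg i)"
        using prod_paths pr_unit1[OF True] idm_paths2[OF e(3)] by simp
      then have "src (kg_product k1 G1 G2) (x, idm G2 b) \<in> H1 \<times> Obj G2" using sub by blast
      then show "z \<in> H1" using x by (simp add: kgp_simps)
    qed
    moreover have "\<exists>l\<in>Mor G1. rng G1 l = a" using e kg_idm[OF kg1] by blast
    ultimately show ?thesis using S e(2) True unfolding saturated_def by blast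
  next
    case False
    have "i - k1 < k2" using False i by simp
    then have "paths_from G2 b (unit_deg (i - k1)) \<noteq> {}" using NS e(3) unfolding no_sources_def by blast
    then obtain y where y: "y \<in> paths_from G2 b (unit_deg (i - k1))" by blast
    then have "(idm G1 a, y) \<in> paths_from (kg_product k1 G1 G2) (a, b) (unit_deg i)"
      using prod_paths pr_unit2[OF False] idm_paths1[OF e(2)] by simp
    then have "src (kg_product k1 G1 G2) (idm G1 a, y) \<in> H1 \<times> Obj G2" using sub by blast
    then show ?thesis using kg_idm(3)[OF kg1 e(2)] by (simp add: kgp_simps)
  qed
  then show "vw \<in> H1 \<times> Obj G2" using e by simp
qed

lemma sat_times2:
  assumes S: "saturated k2 G2 H2" and NS: "no_sources k1 G1"
  shows "saturated (k1 + k2) (kg_product k1 G1 G2) (Obj G1 \<times> H2)"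
  unfolding saturated_def
proof (intro ballI impI)
  fix vw assume vw: "vw \<in> Obj (kg_product k1 G1 G2)" and
    h: "(\<exists>l\<in>Mor (kg_product k1 G1 G2). rng (kg_product k1 G1 G2) l = vw) \<and>
       (\<exists>i<k1 + k2. src (kg_product k1 G1 G2) ` paths_from (kg_product k1 G1 G2) vw (unit_deg i) \<subseteq> Obj G1 \<times> H2)"
  obtain a b where e: "vw = (a, b)" "a \<in> Obj G1" "b \<in> Obj G2" using vw by (auto simp: kgp_simps)
  obtain i where i: "i < k1 + k2" and sub: "src (kg_product k1 G1 G2) ` paths_from (kg_product k1 G1 G2) (a, b) (unit_deg i) \<subseteq> Obj G1 \<times> H2"
    using h unfolding e(1) by blast
  have "b \<in> H2"
  proof (cases "i < k1")
    case False
    have i2: "i - k1 < k2" using False i by simp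
    have "src G2 ` paths_from G2 b (unit_deg (i - k1)) \<subseteq> H2"
    proof
      fix z assume "z \<in> src G2 ` paths_from G2 b (unit_deg (i - k1))"
      then obtain y where y: "y \<in> paths_from G2 b (unit_deg (i - k1))" "z = src G2 y" by blast
      then have "(idm G1 a, y) \<in> paths_from (kg_product k1 G1 G2) (a, b) (unit_deg i)"
        using prod_paths pr_unit2[OF False] idm_paths1[OF e(2)] by simp
      then have "src (kg_product k1 G1 G2) (idm G1 a, y) \<in> Obj G1 \<times> H2" using sub by blast
      then show "z \<in> H2" using y by (simp add: kgp_simps)
    qed
    moreover have "\<exists>l\<in>Mor G2. rng G2 l = b" using e kg_idm[OF kg2] by blast
    ultimately show ?thesis using S e(3) i2 unfolding saturated_def by blast
  next
    case True
    then have "paths_from G1 a (unit_deg i) \<noteq> {}" using NS e(2) unfolding no_sources_def by blast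
    then obtain x where x: "x \<in> paths_from G1 a (unit_deg i)" by blast
    then have "(x, idm G2 b) \<in> paths_from (kg_product k1 G1 G2) (a, b) (unit_deg i)"
      using prod_paths pr_unit1[OF True] idm_paths2[OF e(3)] by simp
    then have "src (kg_product k1 G1 G2) (x, idm G2 b) \<in> Obj G1 \<times> H2" using sub by blast
    then show ?thesis using kg_idm(3)[OF kg2 e(3)] by (simp add: kgp_simps)
  qed
  then show "vw \<in> Obj G1 \<times> H2" using e by simp
qed

lemma slice1:
  assumes hd: "hereditary (kg_product k1 G1 G2) H" and st: "saturated (k1 + k2) (kg_product k1 G1 G2) H"
    and w: "w \<in> Obj G2"
  shows "hereditary G1 {a \<in> Obj G1. (a, w) \<in> H} \<and> saturated k1 G1 {a \<in> Obj G1. (a, w) \<in> H}"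
proof
  show "hereditary G1 {a \<in> Obj G1. (a, w) \<in> H}" unfolding hereditary_def
  proof (intro ballI impI)
    fix l assume l: "l \<in> Mor G1" and r: "rng G1 l \<in> {a \<in> Obj G1. (a, w) \<in> H}"
    have "(l, idm G2 w) \<in> Mor (kg_product k1 G1 G2)" using l w kg_idm[OF kg2] by (simp add: kgp_simps)
    moreover have "rng (kg_product k1 G1 G2) (l, idm G2 w) \<in> H" using r w kg_idm[OF kg2] by (simp add: kgp_simps)
    ultimately have "src (kg_product k1 G1 G2) (l, idm G2 w) \<in> H" using hd unfolding hereditary_def by blast
    then show "src G1 l \<in> {a \<in> Obj G1. (a, w) \<in> H}" using w kg_idm[OF kg2] kg_src[OF kg1 l] by (simp add: kgp_simps)
  qed
  show "saturated k1 G1 {a \<in> Obj G1. (a, w) \<in> H}" unfolding saturated_def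
  proof (intro ballI impI)
    fix a assume a: "a \<in> Obj G1" and h: "(\<exists>l\<in>Mor G1. rng G1 l = a) \<and>
       (\<exists>i<k1. src G1 ` paths_from G1 a (unit_deg i) \<subseteq> {a \<in> Obj G1. (a, w) \<in> H})"
    obtain i where i: "i < k1" and sub: "src G1 ` paths_from G1 a (unit_deg i) \<subseteq> {a \<in> Obj G1. (a, w) \<in> H}" using h by blast
    have "src (kg_product k1 G1 G2) ` paths_from (kg_product k1 G1 G2) (a, w) (unit_deg i) \<subseteq> H"
    proof
      fix z assume "z \<in> src (kg_product k1 G1 G2) ` paths_from (kg_product k1 G1 G2) (a, w) (unit_deg i)"
      then obtain x y where p: "(x, y) \<in> paths_from (kg_product k1 G1 G2) (a, w) (unit_deg i)"
        "z = src (kg_product k1 G1 G2) (x, y)" by auto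
      then have x: "x \<in> paths_from G1 a (unit_deg i)" and y: "y \<in> paths_from G2 w (\<lambda>_. 0)"
        using prod_paths pr_unit1[OF i] by auto
      have ym: "y \<in> Mor G2" "deg G2 y = (\<lambda>_. 0)" "rng G2 y = w" using y by (simp_all add: paths_from_def)
      have "y = idm G2 w" using kg_deg_zero[OF kg2 ym(1,2)] ym(3) by metis
      then have "src G2 y = w" using kg_idm(3)[OF kg2 w] by metis
      moreover have "(src G1 x, w) \<in> H" using x sub by blast
      ultimately show "z \<in> H" using p by (simp add: kgp_simps)
    qed
    moreover have "(a, w) \<in> Obj (kg_product k1 G1 G2)" using a w by (simp add: kgp_simps)
    moreover have "idm (kg_product k1 G1 G2) (a, w) \<in> Mor (kg_product k1 G1 G2) \<and>
        rng (kg_product k1 G1 G2) (idm (kg_product k1 G1 G2) (a, w)) = (a, w)"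
      using a w kg_idm[OF kg1] kg_idm[OF kg2] by (simp add: kgp_simps)
    moreover have "i < k1 + k2" using i by simp
    ultimately have "(a, w) \<in> H" using st unfolding saturated_def by blast
    then show "a \<in> {a \<in> Obj G1. (a, w) \<in> H}" using a by simp
  qed
qed

lemma slice2:
  assumes hd: "hereditary (kg_product k1 G1 G2) H" and st: "saturated (k1 + k2) (kg_product k1 G1 G2) H"
    and v: "v \<in> Obj G1"
  shows "hereditary G2 {b \<in> Obj G2. (v, b) \<in> H} \<and> saturated k2 G2 {b \<in> Obj G2. (v, b) \<in> H}"
proof
  show "hereditary G2 {b \<in> Obj G2. (v, b) \<in> H}" unfolding hereditary_def
  proof (intro ballI impI)
    fix l assume l: "l \<in> Mor G2" and r: "rng G2 l \<in> {b \<in> Obj G2. (v, b) \<in> H}"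
    have "(idm G1 v, l) \<in> Mor (kg_product k1 G1 G2)" using l v kg_idm[OF kg1] by (simp add: kgp_simps)
    moreover have "rng (kg_product k1 G1 G2) (idm G1 v, l) \<in> H" using r v kg_idm[OF kg1] by (simp add: kgp_simps)
    ultimately have "src (kg_product k1 G1 G2) (idm G1 v, l) \<in> H" using hd unfolding hereditary_def by blast
    then show "src G2 l \<in> {b \<in> Obj G2. (v, b) \<in> H}" using v kg_idm[OF kg1] kg_src[OF kg2 l] by (simp add: kgp_simps)
  qed
  show "saturated k2 G2 {b \<in> Obj G2. (v, b) \<in> H}" unfolding saturated_def
  proof (intro ballI impI)
    fix b assume b: "b \<in> Obj G2" and h: "(\<exists>l\<in>Mor G2. rng G2 l = b) \<and>
       (\<exists>i<k2. src G2 ` paths_from G2 b (unit_deg i) \<subseteq> {b \<in> Obj G2. (v, b) \<in> H})"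
    obtain i where i: "i < k2" and sub: "src G2 ` paths_from G2 b (unit_deg i) \<subseteq> {b \<in> Obj G2. (v, b) \<in> H}" using h by blast
    have ni: "\<not> i + k1 < k1" by simp
    have "src (kg_product k1 G1 G2) ` paths_from (kg_product k1 G1 G2) (v, b) (unit_deg (i + k1)) \<subseteq> H"
    proof
      fix z assume "z \<in> src (kg_product k1 G1 G2) ` paths_from (kg_product k1 G1 G2) (v, b) (unit_deg (i + k1))"
      then obtain x y where p: "(x, y) \<in> paths_from (kg_product k1 G1 G2) (v, b) (unit_deg (i + k1))"
        "z = src (kg_product k1 G1 G2) (x, y)" by auto
      then have y: "y \<in> paths_from G2 b (unit_deg i)" and x: "x \<in> paths_from G1 v (\<lambda>_. 0)"
        using prod_paths pr_unit2[OF ni] by auto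
      have xm: "x \<in> Mor G1" "deg G1 x = (\<lambda>_. 0)" "rng G1 x = v" using x by (simp_all add: paths_from_def)
      have "x = idm G1 v" using kg_deg_zero[OF kg1 xm(1,2)] xm(3) by metis
      then have "src G1 x = v" using kg_idm(3)[OF kg1 v] by metis
      moreover have "(v, src G2 y) \<in> H" using y sub by blast
      ultimately show "z \<in> H" using p by (simp add: kgp_simps)
    qed
    moreover have "(v, b) \<in> Obj (kg_product k1 G1 G2)" using v b by (simp add: kgp_simps)
    moreover have "idm (kg_product k1 G1 G2) (v, b) \<in> Mor (kg_product k1 G1 G2) \<and>
        rng (kg_product k1 G1 G2) (idm (kg_product k1 G1 G2) (v, b)) = (v, b)"
      using v b kg_idm[OF kg1] kg_idm[OF kg2] by (simp add: kgp_simps)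
    moreover have "i + k1 < k1 + k2" using i by simp
    ultimately have "(v, b) \<in> H" using st unfolding saturated_def by blast
    then show "b \<in> {b \<in> Obj G2. (v, b) \<in> H}" using b by simp
  qed
qed

end

lemma SA_APH:
  assumes kg: "is_kgraph k G"
  shows "strongly_aperiodic k G \<longleftrightarrow> rfns_kgraph k G \<and>
     (\<forall>H. H \<subseteq> Obj G \<and> hereditary G H \<and> saturated k G H \<longrightarrow> APH k G H)"
proof -
  have A0: "APH k G (Obj G)" unfolding APH_def by simp
  have eq: "(H \<subseteq> Obj G \<and> H \<noteq> Obj G \<and> hereditary G H \<and> saturated k G H \<longrightarrow> aperiodic k (restrict_kg G H)) =
     (H \<subseteq> Obj G \<and> hereditary G H \<and> saturated k G H \<longrightarrow> APH k G H)" for H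
  proof (cases "hereditary G H")
    case True
    show ?thesis unfolding restrict_APH[OF kg True] using A0 by blast
  qed simp
  show ?thesis by (simp only: strongly_aperiodic_def eq)
qed

theorem theorem5p3:
  fixes G1 :: "('v1, 'a1) kgraph" and G2 :: "('v2, 'a2) kgraph" and k1 k2 :: nat
  assumes "is_kgraph k1 G1" and "is_kgraph k2 G2"
    and "Obj G1 \<noteq> {}" and "Obj G2 \<noteq> {}"
  shows "(rfns_kgraph (k1 + k2) (kg_product k1 G1 G2) \<longleftrightarrow>
            rfns_kgraph k1 G1 \<and> rfns_kgraph k2 G2)
       \<and> (aperiodic (k1 + k2) (kg_product k1 G1 G2) \<longleftrightarrow>
            aperiodic k1 G1 \<and> aperiodic k2 G2)
       \<and> (strongly_aperiodic (k1 + k2) (kg_product k1 G1 G2) \<longleftrightarrow>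
            strongly_aperiodic k1 G1 \<and> strongly_aperiodic k2 G2)"
proof -
  note kg1 = assms(1) and kg2 = assms(2) and ne1 = assms(3) and ne2 = assms(4)
  note kgP = prod_kgraph[OF kg1 kg2]
  have A: "rfns_kgraph (k1 + k2) (kg_product k1 G1 G2) \<longleftrightarrow> rfns_kgraph k1 G1 \<and> rfns_kgraph k2 G2"
    using rfns_iff[OF kg1 kg2 ne1 ne2] .
  have B: "aperiodic (k1 + k2) (kg_product k1 G1 G2) \<longleftrightarrow> aperiodic k1 G1 \<and> aperiodic k2 G2"
  proof
    assume "aperiodic (k1 + k2) (kg_product k1 G1 G2)"
    then have P: "APH (k1 + k2) (kg_product k1 G1 G2) {}" by (simp add: aperiodic_APH)
    have "APH k1 G1 {}" using decomp1[OF kg1 kg2 ne2, of "{}"] P by simp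
    moreover have "APH k2 G2 {}" using decomp2[OF kg1 kg2 ne1, of "{}"] P by simp
    ultimately show "aperiodic k1 G1 \<and> aperiodic k2 G2" by (simp add: aperiodic_APH)
  next
    assume "aperiodic k1 G1 \<and> aperiodic k2 G2"
    then have "APH k1 G1 {}" "APH k2 G2 {}" by (simp_all add: aperiodic_APH)
    then have "APH (k1 + k2) (kg_product k1 G1 G2) {}" using core[OF kg1 kg2, of "{}"] by simp
    then show "aperiodic (k1 + k2) (kg_product k1 G1 G2)" by (simp add: aperiodic_APH)
  qed
  have C: "strongly_aperiodic (k1 + k2) (kg_product k1 G1 G2) \<longleftrightarrow>
            strongly_aperiodic k1 G1 \<and> strongly_aperiodic k2 G2"
    unfolding SA_APH[OF kg1] SA_APH[OF kg2] SA_APH[OF kgP]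
  proof safe
    assume R: "rfns_kgraph (k1 + k2) (kg_product k1 G1 G2)"
      and P: "\<forall>H. H \<subseteq> Obj (kg_product k1 G1 G2) \<and> hereditary (kg_product k1 G1 G2) H \<and>
             saturated (k1 + k2) (kg_product k1 G1 G2) H \<longrightarrow> APH (k1 + k2) (kg_product k1 G1 G2) H"
    have r: "rfns_kgraph k1 G1" "rfns_kgraph k2 G2" using A R by blast+
    then show "rfns_kgraph k1 G1" "rfns_kgraph k2 G2" by auto
    show "APH k1 G1 H1" if "H1 \<subseteq> Obj G1" "hereditary G1 H1" "saturated k1 G1 H1" for H1
    proof -
      have "H1 \<times> Obj G2 \<subseteq> Obj (kg_product k1 G1 G2)" using that by (auto simp: kgp_simps)
      moreover have "hereditary (kg_product k1 G1 G2) (H1 \<times> Obj G2)" using her_times1[OF kg1 kg2 that(2)] .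
      moreover have "saturated (k1 + k2) (kg_product k1 G1 G2) (H1 \<times> Obj G2)"
        using sat_times1[OF kg1 kg2 that(3)] r(2) by (simp add: rfns_kgraph_def)
      ultimately show ?thesis using P[rule_format] decomp1[OF kg1 kg2 ne2] by blast
    qed
    show "APH k2 G2 H2" if "H2 \<subseteq> Obj G2" "hereditary G2 H2" "saturated k2 G2 H2" for H2
    proof -
      have "Obj G1 \<times> H2 \<subseteq> Obj (kg_product k1 G1 G2)" using that by (auto simp: kgp_simps)
      moreover have "hereditary (kg_product k1 G1 G2) (Obj G1 \<times> H2)" using her_times2[OF kg1 kg2 that(2)] .
      moreover have "saturated (k1 + k2) (kg_product k1 G1 G2) (Obj G1 \<times> H2)"
        using sat_times2[OF kg1 kg2 that(3)] r(1) by (simp add: rfns_kgraph_def)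
      ultimately show ?thesis using P[rule_format] decomp2[OF kg1 kg2 ne1] by blast
    qed
  next
    assume r1: "rfns_kgraph k1 G1" and r2: "rfns_kgraph k2 G2"
      and P1: "\<forall>H. H \<subseteq> Obj G1 \<and> hereditary G1 H \<and> saturated k1 G1 H \<longrightarrow> APH k1 G1 H"
      and P2: "\<forall>H. H \<subseteq> Obj G2 \<and> hereditary G2 H \<and> saturated k2 G2 H \<longrightarrow> APH k2 G2 H"
    show "rfns_kgraph (k1 + k2) (kg_product k1 G1 G2)" using A r1 r2 by blast
    show "APH (k1 + k2) (kg_product k1 G1 G2) H"
      if "H \<subseteq> Obj (kg_product k1 G1 G2)" "hereditary (kg_product k1 G1 G2) H"
        "saturated (k1 + k2) (kg_product k1 G1 G2) H" for H
    proof (rule core[OF kg1 kg2])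
      show "\<forall>w\<in>Obj G2. APH k1 G1 {a \<in> Obj G1. (a, w) \<in> H}"
      proof
        fix w assume w: "w \<in> Obj G2"
        have "{a \<in> Obj G1. (a, w) \<in> H} \<subseteq> Obj G1" by blast
        then show "APH k1 G1 {a \<in> Obj G1. (a, w) \<in> H}"
          using P1[rule_format] slice1[OF kg1 kg2 that(2,3) w] by blast
      qed
      show "\<forall>a\<in>Obj G1. APH k2 G2 {b \<in> Obj G2. (a, b) \<in> H}"
      proof
        fix v assume v: "v \<in> Obj G1"
        have "{b \<in> Obj G2. (v, b) \<in> H} \<subseteq> Obj G2" by blast
        then show "APH k2 G2 {b \<in> Obj G2. (v, b) \<in> H}"
          using P2[rule_format] slice2[OF kg1 kg2 that(2,3) v] by blast
      qed
    qed
  qed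
  show ?thesis by (rule conjI[OF A conjI[OF B C]])
qed

end
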